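(* Let $A$ be an involutive alphabet and let $\Gamma$ be an involutive $A$-tree. Then $\Gamma$ is regular if and only if $\Gamma$ is context-free.
   Context: An involutive alphabet is an alphabet $A$ with an involution $a\mapsto a^{-1}$ (fixed points allowed); any alphabet $A$ yields the involutive alphabet $A^{\pm1}=A\uplus A^{-1}$. An $A$-graph is a pair $(V,E)$ with $E\subseteq V\times A\times V$; an edge $(u,a,v)$ goes from $u$ to $v$ with label $a$. It is involutive if $(u,a,v)\in E\iff(v,a^{-1},u)\in E$; the inverse of the edge $(u,a,v)$ is $(v,a^{-1},u)$. The involutive closure of an $A$-graph adds all inverse edges (passing to $A^{\pm1}$ if $A$ is not involutive). A path is reduced if it contains no edge immediately followed by its inverse. A rooted involutive graph is a tree if every vertex is the end of a unique reduced path starting at the root (this does not depend on the root). An isomorphism of $A$-graphs is a bijection on vertices preserving and reflecting labeled edges; rooted isomorphisms also map root to root; for node-labeled $A$-graphs (with node labelings $p\colon V\to P$, $q\colon W\to Q$) an isomorphism is an $A$-isomorphism $\iota$ together with a bijection $\beta\colon P\to Q$ with $\beta(p(v))=q(\iota(v))$. Context-free: For a connected rooted involutive graph, the level of a node is its distance from the root; $\Gamma_n$ is the subgraph on nodes of level $\ge n$; for $v$ at level $n$, the end-cone $\Gamma(v)$ is the connected component of $\Gamma_n$ containing $v$, and its nodes of level exactly $n$ are its frontier points. An end-isomorphism is an $A$-isomorphism between two end-cones mapping frontier points onto frontier points. A connected involutive $A$-graph with $A$ a finite involutive alphabet is context-free if it has uniformly bounded degree and there is a choice of root for which there are only finitely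 many end-isomorphism classes of end-cones. Regular: A multi-edge NFA (mNFA) is $\mathcal{A}=(Q,A,T,\alpha,\lambda,\omega)$ with finite state set $Q$, finite alphabet $A$, finite transition set $T$ and maps $\alpha,\omega\colon T\to Q$ (start, end) and $\lambda\colon T\to A$ (label); multiple transitions with the same start, label and end are allowed. A run is a sequence $\tau_1\cdots\tau_\ell$ of transitions with $\omega(\tau_i)=\alpha(\tau_{i+1})$. For a state $p$, $\Gamma(p)$ is the graph whose nodes are the runs starting in $p$ (including the empty run $\varepsilon$, which is the root), with an edge from $\varrho$ to $\varrho\tau$ labeled $\lambda(\tau)$ for each transition $\tau$, then taking the involutive closure (viewing $A$ as involutive, passing to $A^{\pm1}$ if necessary); each node $\varrho$ is labeled by the state in which $\varrho$ ends ($p$ for $\varepsilon$). A rooted node-labeled involutive $A$-tree is regular if it is isomorphic as a rooted node-labeled $A$-graph to $\Gamma(p)$ for some state $p$ of some mNFA with alphabet $A$; a rooted involutive $A$-tree is regular if it is regular for some node labeling; an involutive $A$-tree is regular if it is regular for some choice of vertex as root. *)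

theory Defs
  imports Main
begin

definition involutive_alphabet :: "'a set \<Rightarrow> ('a \<Rightarrow> 'a) \<Rightarrow> bool" where
  "involutive_alphabet A iv \<longleftrightarrow> finite A \<and> (\<forall>a\<in>A. iv a \<in> A \<and> iv (iv a) = a)"

definition A_graph :: "'a set \<Rightarrow> 'v set \<Rightarrow> ('v \<times> 'a \<times> 'v) set \<Rightarrow> bool" where
  "A_graph A V E \<longleftrightarrow> E \<subseteq> V \<times> A \<times> V"

definition inv_edge :: "('a \<Rightarrow> 'a) \<Rightarrow> ('v \<times> 'a \<times> 'v) \<Rightarrow> ('v \<times> 'a \<times> 'v)" where
  "inv_edge iv e = (case e of (u, a, v) \<Rightarrow> (v, iv a, u))"

definition involutive_graph :: "('a \<Rightarrow> 'a) \<Rightarrow> ('v \<times> 'a \<times> 'v) set \<Rightarrow> bool" where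
  "involutive_graph iv E \<longleftrightarrow> (\<forall>u a v. (u, a, v) \<in> E \<longleftrightarrow> (v, iv a, u) \<in> E)"

definition inv_closure :: "('a \<Rightarrow> 'a) \<Rightarrow> ('v \<times> 'a \<times> 'v) set \<Rightarrow> ('v \<times> 'a \<times> 'v) set" where
  "inv_closure iv E = E \<union> inv_edge iv ` E"

fun walk :: "('v \<times> 'a \<times> 'v) set \<Rightarrow> 'v \<Rightarrow> ('v \<times> 'a \<times> 'v) list \<Rightarrow> 'v \<Rightarrow> bool" where
  "walk E u [] v = (u = v)"
| "walk E u ((x, a, y) # es) v = (x = u \<and> (x, a, y) \<in> E \<and> walk E y es v)"

definition reduced_path :: "('a \<Rightarrow> 'a) \<Rightarrow> ('v \<times> 'a \<times> 'v) list \<Rightarrow> bool" where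
  "reduced_path iv es \<longleftrightarrow> (\<forall>i. Suc i < length es \<longrightarrow> es ! Suc i \<noteq> inv_edge iv (es ! i))"

definition rooted_tree :: "('a \<Rightarrow> 'a) \<Rightarrow> 'v set \<Rightarrow> ('v \<times> 'a \<times> 'v) set \<Rightarrow> 'v \<Rightarrow> bool" where
  "rooted_tree iv V E r \<longleftrightarrow> involutive_graph iv E \<and> r \<in> V \<and>
     (\<forall>v\<in>V. \<exists>!es. walk E r es v \<and> reduced_path iv es)"

text \<open>An (unrooted) involutive tree: a tree for some choice of root
  (by the paper this does not depend on the root).\<close>
definition is_tree :: "('a \<Rightarrow> 'a) \<Rightarrow> 'v set \<Rightarrow> ('v \<times> 'a \<times> 'v) set \<Rightarrow> bool" where
  "is_tree iv V E \<longleftrightarrow> (\<exists>r\<in>V. rooted_tree iv V E r)"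

definition A_iso :: "'v set \<Rightarrow> ('v \<times> 'a \<times> 'v) set \<Rightarrow> 'w set \<Rightarrow> ('w \<times> 'a \<times> 'w) set
    \<Rightarrow> ('v \<Rightarrow> 'w) \<Rightarrow> bool" where
  "A_iso V E W F \<iota> \<longleftrightarrow> bij_betw \<iota> V W \<and>
     (\<forall>u\<in>V. \<forall>v\<in>V. \<forall>a. (u, a, v) \<in> E \<longleftrightarrow> (\<iota> u, a, \<iota> v) \<in> F)"

definition rooted_labeled_iso ::
  "'v set \<Rightarrow> ('v \<times> 'a \<times> 'v) set \<Rightarrow> 'v \<Rightarrow> 'l set \<Rightarrow> ('v \<Rightarrow> 'l)
   \<Rightarrow> 'w set \<Rightarrow> ('w \<times> 'a \<times> 'w) set \<Rightarrow> 'w \<Rightarrow> 'm set \<Rightarrow> ('w \<Rightarrow> 'm) \<Rightarrow> bool" where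
  "rooted_labeled_iso V E r P p W F s Q q \<longleftrightarrow>
     (\<exists>\<iota> \<beta>. A_iso V E W F \<iota> \<and> \<iota> r = s \<and> bij_betw \<beta> P Q \<and>
        (\<forall>v\<in>V. \<beta> (p v) = q (\<iota> v)))"

definition connected_graph :: "'v set \<Rightarrow> ('v \<times> 'a \<times> 'v) set \<Rightarrow> bool" where
  "connected_graph V E \<longleftrightarrow> (\<forall>u\<in>V. \<forall>v\<in>V. \<exists>es. walk E u es v)"

definition bounded_degree :: "'v set \<Rightarrow> ('v \<times> 'a \<times> 'v) set \<Rightarrow> bool" where
  "bounded_degree V E \<longleftrightarrow> (\<exists>k::nat. \<forall>v\<in>V. finite {e\<in>E. fst e = v} \<and> card {e\<in>E. fst e = v} \<le> k)"

definition level :: "('v \<times> 'a \<times> 'v) set \<Rightarrow> 'v \<Rightarrow> 'v \<Rightarrow> nat" where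
  "level E r v = (LEAST n. \<exists>es. walk E r es v \<and> length es = n)"

definition level_ge_nodes :: "'v set \<Rightarrow> ('v \<times> 'a \<times> 'v) set \<Rightarrow> 'v \<Rightarrow> nat \<Rightarrow> 'v set" where
  "level_ge_nodes V E r n = {v\<in>V. n \<le> level E r v}"

definition induced_edges :: "('v \<times> 'a \<times> 'v) set \<Rightarrow> 'v set \<Rightarrow> ('v \<times> 'a \<times> 'v) set" where
  "induced_edges E C = {(u, a, v) \<in> E. u \<in> C \<and> v \<in> C}"

definition end_cone_nodes :: "'v set \<Rightarrow> ('v \<times> 'a \<times> 'v) set \<Rightarrow> 'v \<Rightarrow> 'v \<Rightarrow> 'v set" where
  "end_cone_nodes V E r v =
     (let Vn = level_ge_nodes V E r (level E r v)
      in {w. \<exists>es. walk (induced_edges E Vn) v es w})"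

definition end_cone_edges :: "'v set \<Rightarrow> ('v \<times> 'a \<times> 'v) set \<Rightarrow> 'v \<Rightarrow> 'v \<Rightarrow> ('v \<times> 'a \<times> 'v) set" where
  "end_cone_edges V E r v = induced_edges E (end_cone_nodes V E r v)"

definition frontier :: "'v set \<Rightarrow> ('v \<times> 'a \<times> 'v) set \<Rightarrow> 'v \<Rightarrow> 'v \<Rightarrow> 'v set" where
  "frontier V E r v = {w \<in> end_cone_nodes V E r v. level E r w = level E r v}"

definition end_isomorphic :: "'v set \<Rightarrow> ('v \<times> 'a \<times> 'v) set \<Rightarrow> 'v \<Rightarrow> 'v \<Rightarrow> 'v \<Rightarrow> bool" where
  "end_isomorphic V E r u v \<longleftrightarrow>
     (\<exists>\<iota>. A_iso (end_cone_nodes V E r u) (end_cone_edges V E r u)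
               (end_cone_nodes V E r v) (end_cone_edges V E r v) \<iota>
         \<and> \<iota> ` frontier V E r u = frontier V E r v)"

definition context_free ::
  "'a set \<Rightarrow> ('a \<Rightarrow> 'a) \<Rightarrow> 'v set \<Rightarrow> ('v \<times> 'a \<times> 'v) set \<Rightarrow> bool" where
  "context_free A iv V E \<longleftrightarrow>
     involutive_alphabet A iv \<and> A_graph A V E \<and> involutive_graph iv E \<and>
     connected_graph V E \<and> bounded_degree V E \<and>
     (\<exists>r\<in>V. finite ((\<lambda>v. {w\<in>V. end_isomorphic V E r w v}) ` V))"

definition mNFA :: "'a set \<Rightarrow> 's set \<Rightarrow> 't set \<Rightarrow> ('t \<Rightarrow> 's) \<Rightarrow> ('t \<Rightarrow> 'a) \<Rightarrow> ('t \<Rightarrow> 's) \<Rightarrow> bool" where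
  "mNFA A Q T \<alpha> lb \<omega> \<longleftrightarrow> finite Q \<and> finite A \<and> finite T \<and>
     (\<forall>\<tau>\<in>T. \<alpha> \<tau> \<in> Q \<and> \<omega> \<tau> \<in> Q \<and> lb \<tau> \<in> A)"

definition runs :: "'t set \<Rightarrow> ('t \<Rightarrow> 's) \<Rightarrow> ('t \<Rightarrow> 's) \<Rightarrow> 's \<Rightarrow> 't list set" where
  "runs T \<alpha> \<omega> p = {\<rho>. set \<rho> \<subseteq> T \<and> (\<rho> \<noteq> [] \<longrightarrow> \<alpha> (hd \<rho>) = p) \<and>
      (\<forall>i. Suc i < length \<rho> \<longrightarrow> \<omega> (\<rho> ! i) = \<alpha> (\<rho> ! Suc i))}"

definition run_edges :: "('a \<Rightarrow> 'a) \<Rightarrow> 't set \<Rightarrow> ('t \<Rightarrow> 's) \<Rightarrow> ('t \<Rightarrow> 'a) \<Rightarrow> ('t \<Rightarrow> 's) \<Rightarrow> 's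
    \<Rightarrow> ('t list \<times> 'a \<times> 't list) set" where
  "run_edges iv T \<alpha> lb \<omega> p = inv_closure iv
     {(\<rho>, lb \<tau>, \<rho> @ [\<tau>]) | \<rho> \<tau>. \<tau> \<in> T \<and> \<rho> \<in> runs T \<alpha> \<omega> p \<and> \<rho> @ [\<tau>] \<in> runs T \<alpha> \<omega> p}"

definition end_state :: "('t \<Rightarrow> 's) \<Rightarrow> 's \<Rightarrow> 't list \<Rightarrow> 's" where
  "end_state \<omega> p \<rho> = (if \<rho> = [] then p else \<omega> (last \<rho>))"

text \<open>Regular rooted node-labelled tree. States and transitions of the mNFA are
  taken to be natural numbers (w.l.o.g., they form finite sets).\<close>
definition regular_labeled ::
  "'a set \<Rightarrow> ('a \<Rightarrow> 'a) \<Rightarrow> 'v set \<Rightarrow> ('v \<times> 'a \<times> 'v) set \<Rightarrow> 'v \<Rightarrow> 'l set \<Rightarrow> ('v \<Rightarrow> 'l) \<Rightarrow> bool" where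
  "regular_labeled A iv V E r P lab \<longleftrightarrow>
     (\<exists>(Q::nat set) (T::nat set) \<alpha> lb \<omega> p. mNFA A Q T \<alpha> lb \<omega> \<and> p \<in> Q \<and>
        rooted_labeled_iso V E r P lab
          (runs T \<alpha> \<omega> p) (run_edges iv T \<alpha> lb \<omega> p) [] Q (end_state \<omega> p))"

text \<open>Regular rooted tree: regular for some node labelling (labels taken in nat,
  w.l.o.g. since the label set is in bijection with a finite state set).\<close>
definition regular_rooted ::
  "'a set \<Rightarrow> ('a \<Rightarrow> 'a) \<Rightarrow> 'v set \<Rightarrow> ('v \<times> 'a \<times> 'v) set \<Rightarrow> 'v \<Rightarrow> bool" where
  "regular_rooted A iv V E r \<longleftrightarrow>
     (\<exists>(P::nat set) (lab::'v \<Rightarrow> nat). lab ` V \<subseteq> P \<and> regular_labeled A iv V E r P lab)"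

definition regular_tree ::
  "'a set \<Rightarrow> ('a \<Rightarrow> 'a) \<Rightarrow> 'v set \<Rightarrow> ('v \<times> 'a \<times> 'v) set \<Rightarrow> bool" where
  "regular_tree A iv V E \<longleftrightarrow> (\<exists>r\<in>V. regular_rooted A iv V E r)"

end

theory Submission
  imports Defs
begin


lemma walk_append: "walk E u (xs @ ys) w \<longleftrightarrow> (\<exists>v. walk E u xs v \<and> walk E v ys w)"
  by (induction xs arbitrary: u) auto

lemma walk_Cons: "walk E u (e # es) w \<longleftrightarrow> fst e = u \<and> e \<in> E \<and> walk E (snd (snd e)) es w"
  by (cases e) auto

lemma walk_snoc: "walk E u (xs @ [(x,a,y)]) w \<longleftrightarrow> walk E u xs x \<and> (x,a,y) \<in> E \<and> y = w"
  by (auto simp: walk_append)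

lemma walk_end_unique: "walk E u es v \<Longrightarrow> walk E u es v' \<Longrightarrow> v = v'"
  by (induction es arbitrary: u) auto

lemma walk_set: "walk E u es v \<Longrightarrow> set es \<subseteq> E"
proof (induction es arbitrary: u)
  case (Cons e es) then show ?case by (cases e) auto
qed simp

lemma walk_in_V: "A_graph A V E \<Longrightarrow> u \<in> V \<Longrightarrow> walk E u es v \<Longrightarrow> v \<in> V"
  by (induction es arbitrary: u) (auto simp: A_graph_def)

lemma reduced_Nil[simp]: "reduced_path iv []" by (simp add: reduced_path_def)
lemma reduced_single[simp]: "reduced_path iv [e]" by (simp add: reduced_path_def)

lemma reduced_Cons2: "reduced_path iv (e1 # e2 # es) \<longleftrightarrow> e2 \<noteq> inv_edge iv e1 \<and> reduced_path iv (e2 # es)"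
  unfolding reduced_path_def
  apply (rule iffI)
   apply (intro conjI)
    apply (drule spec[of _ 0]; simp)
   apply (intro allI impI)
  subgoal for i by (drule spec[of _ "Suc i"]) simp
  apply (intro allI impI)
  subgoal for i by (cases i) auto
  done

lemma reduced_Cons: "reduced_path iv (e # es) \<longleftrightarrow> reduced_path iv es \<and> (es \<noteq> [] \<longrightarrow> hd es \<noteq> inv_edge iv e)"
  by (cases es) (auto simp: reduced_Cons2)

lemma reduced_append: "reduced_path iv (xs @ ys) \<longleftrightarrow> reduced_path iv xs \<and> reduced_path iv ys \<and>
   (xs \<noteq> [] \<and> ys \<noteq> [] \<longrightarrow> hd ys \<noteq> inv_edge iv (last xs))"
  by (induction xs) (auto simp: reduced_Cons)

lemma reduced_snoc: "reduced_path iv (xs @ [e]) \<longleftrightarrow> reduced_path iv xs \<and> (xs \<noteq> [] \<longrightarrow> e \<noteq> inv_edge iv (last xs))"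
  by (simp add: reduced_append)

lemma reduced_take: "reduced_path iv xs \<Longrightarrow> reduced_path iv (take k xs)"
  by (metis append_take_drop_id reduced_append)

lemma inv_edge_simp[simp]: "inv_edge iv (u, a, v) = (v, iv a, u)"
  by (simp add: inv_edge_def)

lemma walk_rev: "involutive_graph iv E \<Longrightarrow> walk E u es v \<Longrightarrow> walk E v (rev (map (inv_edge iv) es)) u"
  apply (induction es arbitrary: u)
   apply simp
  apply (auto simp: walk_append involutive_graph_def)
  done

lemma reroot_step:
  assumes alph: "involutive_alphabet A iv" and gr: "A_graph A V E" and inv: "involutive_graph iv E"
    and t: "rooted_tree iv V E r" and e: "(r, a, s) \<in> E"
  shows "rooted_tree iv V E s"
proof -
  have aA: "a \<in> A" and sV: "s \<in> V" using e gr by (auto simp: A_graph_def)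
  have ivv: "iv (iv a) = a" using alph aA by (auto simp: involutive_alphabet_def)
  have e': "(s, iv a, r) \<in> E" using e inv by (simp add: involutive_graph_def)
  have ex: "\<forall>v\<in>V. \<exists>!es. walk E r es v \<and> reduced_path iv es" using t by (simp add: rooted_tree_def)
  define f where "f w = (if w \<noteq> [] \<and> hd w = (s, iv a, r) then tl w else (r, a, s) # w)" for w
  have fw: "walk E r (f w) v \<and> reduced_path iv (f w)" if "walk E s w v" "reduced_path iv w" for w v
  proof (cases "w \<noteq> [] \<and> hd w = (s, iv a, r)")
    case True
    then obtain w' where w: "w = (s, iv a, r) # w'" by (cases w) auto
    show ?thesis using that True unfolding f_def w by (auto simp: reduced_Cons)
  next
    case False
    show ?thesis using that False e unfolding f_def by (auto simp: reduced_Cons ivv)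
  qed
  have finj: "w1 = w2" if "reduced_path iv w1" "reduced_path iv w2" "f w1 = f w2" for w1 w2
  proof -
    consider "w1 \<noteq> [] \<and> hd w1 = (s, iv a, r)" "w2 \<noteq> [] \<and> hd w2 = (s, iv a, r)"
      | "w1 \<noteq> [] \<and> hd w1 = (s, iv a, r)" "\<not>(w2 \<noteq> [] \<and> hd w2 = (s, iv a, r))"
      | "\<not>(w1 \<noteq> [] \<and> hd w1 = (s, iv a, r))" "w2 \<noteq> [] \<and> hd w2 = (s, iv a, r)"
      | "\<not>(w1 \<noteq> [] \<and> hd w1 = (s, iv a, r))" "\<not>(w2 \<noteq> [] \<and> hd w2 = (s, iv a, r))" by blast
    then show ?thesis
    proof cases
      case 1 then show ?thesis using that(3) unfolding f_def by (cases w1; cases w2) auto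
    next
      case 2
      then obtain w1' where w1: "w1 = (s, iv a, r) # w1'" by (cases w1) auto
      have "w1' = (r, a, s) # w2" using that(3) 2 unfolding f_def w1 by auto
      then show ?thesis using that(1) unfolding w1 by (auto simp: reduced_Cons ivv)
    next
      case 3
      then obtain w2' where w2: "w2 = (s, iv a, r) # w2'" by (cases w2) auto
      have "w2' = (r, a, s) # w1" using that(3) 3 unfolding f_def w2 by auto
      then show ?thesis using that(2) unfolding w2 by (auto simp: reduced_Cons ivv)
    next
      case 4 then show ?thesis using that(3) unfolding f_def by auto
    qed
  qed
  have "\<exists>!es. walk E s es v \<and> reduced_path iv es" if vV: "v \<in> V" for v
  proof -
    obtain p where p: "walk E r p v" "reduced_path iv p" using ex vV by blast
    have "\<exists>es. walk E s es v \<and> reduced_path iv es"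
    proof (cases "p \<noteq> [] \<and> hd p = (r, a, s)")
      case True
      then obtain p' where pp: "p = (r, a, s) # p'" by (cases p) auto
      show ?thesis using p unfolding pp by (auto simp: reduced_Cons)
    next
      case False
      show ?thesis
        apply (rule exI[of _ "(s, iv a, r) # p"])
        using p False e' by (auto simp: reduced_Cons ivv)
    qed
    moreover have "w1 = w2" if "walk E s w1 v \<and> reduced_path iv w1" "walk E s w2 v \<and> reduced_path iv w2" for w1 w2
    proof -
      have "f w1 = f w2" using fw[of w1 v] fw[of w2 v] that ex vV by blast
      then show ?thesis using finj that by blast
    qed
    ultimately show ?thesis by blast
  qed
  then show ?thesis using inv sV by (simp add: rooted_tree_def)
qed

lemma reroot_walk:
  assumes alph: "involutive_alphabet A iv" and gr: "A_graph A V E" and inv: "involutive_graph iv E"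
  shows "rooted_tree iv V E r \<Longrightarrow> walk E r es r' \<Longrightarrow> rooted_tree iv V E r'"
proof (induction es arbitrary: r)
  case Nil then show ?case by simp
next
  case (Cons e es)
  obtain x a y where e: "e = (x, a, y)" by (cases e)
  then show ?case using Cons reroot_step[OF alph gr inv, of r a y] by auto
qed

lemma reroot:
  assumes alph: "involutive_alphabet A iv" and gr: "A_graph A V E" and inv: "involutive_graph iv E"
    and t: "rooted_tree iv V E r" and r': "r' \<in> V"
  shows "rooted_tree iv V E r'"
proof -
  obtain es where "walk E r es r'" using t r' unfolding rooted_tree_def by blast
  then show ?thesis using reroot_walk[OF alph gr inv t] by blast
qed



locale tree_ctx =
  fixes A :: "'a set" and iv :: "'a \<Rightarrow> 'a" and V :: "'v set" and E :: "('v \<times> 'a \<times> 'v) set" and r :: 'v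
  assumes alph: "involutive_alphabet A iv" and gr: "A_graph A V E" and inv: "involutive_graph iv E"
    and tree: "rooted_tree iv V E r"
begin

lemma rV: "r \<in> V" using tree by (simp add: rooted_tree_def)

lemma edgeV: "(x, a, y) \<in> E \<Longrightarrow> x \<in> V \<and> a \<in> A \<and> y \<in> V"
  using gr by (auto simp: A_graph_def)

lemma ivv: "a \<in> A \<Longrightarrow> iv (iv a) = a"
  using alph by (simp add: involutive_alphabet_def)

lemma inv_edgeE: "(x, a, y) \<in> E \<Longrightarrow> (y, iv a, x) \<in> E"
  using inv by (simp add: involutive_graph_def)

definition pth :: "'v \<Rightarrow> ('v \<times> 'a \<times> 'v) list" where
  "pth v = (THE es. walk E r es v \<and> reduced_path iv es)"

lemma pth: "v \<in> V \<Longrightarrow> walk E r (pth v) v \<and> reduced_path iv (pth v)"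
  unfolding pth_def using tree by (simp add: rooted_tree_def) (metis (no_types, lifting) theI')

lemma pth_unique: "walk E r es v \<Longrightarrow> reduced_path iv es \<Longrightarrow> pth v = es"
proof -
  assume w: "walk E r es v" and rd: "reduced_path iv es"
  have vV: "v \<in> V" using walk_in_V[OF gr rV w] .
  then have "\<exists>!es. walk E r es v \<and> reduced_path iv es" using tree by (simp add: rooted_tree_def)
  then show ?thesis using pth[OF vV] w rd by blast
qed

lemma pth_r: "pth r = []"
  by (rule pth_unique) auto

lemma pth_inj: "v \<in> V \<Longrightarrow> w \<in> V \<Longrightarrow> pth v = pth w \<Longrightarrow> v = w"
  using pth walk_end_unique by metis

lemma pth_Nil: "v \<in> V \<Longrightarrow> pth v = [] \<Longrightarrow> v = r"
  using pth_inj pth_r rV by metis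

lemma pth_prefix: "v \<in> V \<Longrightarrow> pth v = xs @ ys \<Longrightarrow> \<exists>x\<in>V. pth x = xs \<and> walk E x ys v"
proof -
  assume vV: "v \<in> V" and p: "pth v = xs @ ys"
  then obtain x where x: "walk E r xs x" "walk E x ys v" using pth[OF vV] by (auto simp: walk_append)
  have "reduced_path iv xs" using pth[OF vV] p by (simp add: reduced_append)
  then show ?thesis using x pth_unique walk_in_V[OF gr rV x(1)] by blast
qed

lemma pth_snoc: "v \<in> V \<Longrightarrow> pth v \<noteq> [] \<Longrightarrow> \<exists>x a. x \<in> V \<and> (x, a, v) \<in> E \<and> pth v = pth x @ [(x, a, v)]"
proof -
  assume vV: "v \<in> V" and ne: "pth v \<noteq> []"
  obtain xs e where p: "pth v = xs @ [e]" using ne by (metis rev_exhaust)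
  obtain x where x: "x \<in> V" "pth x = xs" "walk E x [e] v" using pth_prefix[OF vV p] by blast
  obtain x' a y where e: "e = (x', a, y)" by (cases e)
  show ?thesis using x p unfolding e by auto
qed

lemma edge_cases: "(u, a, w) \<in> E \<Longrightarrow> pth w = pth u @ [(u, a, w)] \<or> pth u = pth w @ [(w, iv a, u)]"
proof -
  assume e: "(u, a, w) \<in> E"
  have uV: "u \<in> V" and aA: "a \<in> A" using edgeV[OF e] by auto
  have wk: "walk E r (pth u @ [(u, a, w)]) w" using pth[OF uV] e by (simp add: walk_snoc)
  show ?thesis
  proof (cases "reduced_path iv (pth u @ [(u, a, w)])")
    case True then show ?thesis using pth_unique[OF wk] by simp
  next
    case False
    then have ne: "pth u \<noteq> []" and l0: "(u, a, w) = inv_edge iv (last (pth u))"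
      using pth[OF uV] by (auto simp: reduced_snoc)
    obtain x b y where lx: "last (pth u) = (x, b, y)" by (cases "last (pth u)")
    have "(x, b, y) \<in> E" using walk_set[OF conjunct1[OF pth[OF uV]]] last_in_set[OF ne] lx by auto
    then have "b \<in> A" using edgeV by blast
    then have l: "last (pth u) = (w, iv a, u)" using l0 lx ivv[of b] by simp
    have xs: "pth u = butlast (pth u) @ [(w, iv a, u)]" using append_butlast_last_id[OF ne] l by simp
    define xs where "xs = butlast (pth u)"
    note xs = xs[folded xs_def]
    then obtain x where "x \<in> V" "pth x = xs" "walk E x [(w, iv a, u)] u" using pth_prefix[OF uV] by blast
    then have "x = w" by simp
    then show ?thesis using xs \<open>pth x = xs\<close> by simp
  qed
qed

definition d :: "'v \<Rightarrow> nat" where "d v = length (pth v)"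

lemma d_walk: "walk E u es w \<Longrightarrow> u \<in> V \<Longrightarrow> d w \<le> d u + length es"
proof (induction es arbitrary: u)
  case Nil then show ?case by simp
next
  case (Cons e es)
  obtain x a y where e: "e = (x, a, y)" by (cases e)
  have ed: "(u, a, y) \<in> E" "walk E y es w" using Cons.prems e by auto
  have "d y \<le> d u + 1" using edge_cases[OF ed(1)] unfolding d_def by auto
  moreover have "d w \<le> d y + length es" using Cons.IH[OF ed(2)] edgeV[OF ed(1)] by auto
  ultimately show ?case by simp
qed

lemma level_eq: assumes vV: "v \<in> V" shows "level E r v = d v"
  unfolding level_def
proof (rule Least_equality)
  show "\<exists>es. walk E r es v \<and> length es = d v" using pth[OF vV] unfolding d_def by blast
next
  fix n assume "\<exists>es. walk E r es v \<and> length es = n"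
  then obtain es where "walk E r es v" "length es = n" by blast
  then have "d v \<le> d r + n" using d_walk rV by blast
  then show "d v \<le> n" using pth_r d_def by simp
qed

definition desc :: "'v \<Rightarrow> 'v set" where "desc u = {w \<in> V. \<exists>ds. pth w = pth u @ ds}"

lemma desc_self: "u \<in> V \<Longrightarrow> u \<in> desc u" by (auto simp: desc_def)
lemma desc_V: "desc u \<subseteq> V" by (auto simp: desc_def)
lemma desc_trans: "w \<in> desc z \<Longrightarrow> z \<in> desc u \<Longrightarrow> w \<in> desc u" by (auto simp: desc_def)
lemma desc_d: "w \<in> desc u \<Longrightarrow> d u \<le> d w" by (auto simp: desc_def d_def)
lemma desc_d_eq: "w \<in> desc u \<Longrightarrow> u \<in> V \<Longrightarrow> d w = d u \<Longrightarrow> w = u"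
  by (auto simp: desc_def d_def intro: pth_inj)

lemma end_cone_desc: assumes uV: "u \<in> V" shows "end_cone_nodes V E r u = desc u"
proof -
  define Vn where "Vn = level_ge_nodes V E r (level E r u)"
  have Vn: "Vn = {v \<in> V. d u \<le> d v}" unfolding Vn_def level_ge_nodes_def using level_eq uV by auto
  have 1: "walk (induced_edges E Vn) u es w \<Longrightarrow> w \<in> desc u" for es w
  proof (induction es arbitrary: w rule: rev_induct)
    case Nil then show ?case using desc_self uV by simp
  next
    case (snoc e es)
    obtain x a y where e: "e = (x, a, y)" by (cases e)
    have wk: "walk (induced_edges E Vn) u es x" and ed: "(x, a, y) \<in> E" "x \<in> Vn" "y \<in> Vn" and yw: "y = w"
      using snoc.prems unfolding e walk_snoc induced_edges_def by auto
    have xd: "x \<in> desc u" using snoc.IH[OF wk] .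
    then obtain ds where ds: "pth x = pth u @ ds" by (auto simp: desc_def)
    from edge_cases[OF ed(1)] show ?case
    proof
      assume "pth y = pth x @ [(x, a, y)]"
      then show ?thesis using ds ed Vn yw by (auto simp: desc_def)
    next
      assume py: "pth x = pth y @ [(y, iv a, x)]"
      have "ds \<noteq> []"
      proof
        assume "ds = []"
        then have "length (pth x) = length (pth y) + 1" "pth x = pth u" using py ds by auto
        then show False using ed(3) Vn unfolding d_def by auto
      qed
      then have "pth y = pth u @ butlast ds" using py ds
        by (metis butlast_append butlast_snoc)
      then show ?thesis using ed Vn yw by (auto simp: desc_def)
    qed
  qed
  have 2: "x \<in> V \<Longrightarrow> w \<in> V \<Longrightarrow> pth w = pth x @ ds \<Longrightarrow> d u \<le> d x \<Longrightarrow> walk (induced_edges E Vn) x ds w" for ds x w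
  proof (induction ds arbitrary: x)
    case Nil then show ?case using pth_inj[of w x] by auto
  next
    case (Cons e ds)
    obtain x' a y where e: "e = (x', a, y)" by (cases e)
    have wV: "w \<in> V" using Cons.prems(2) .
    have "pth w = (pth x @ [e]) @ ds" using Cons.prems by simp
    then obtain y' where y': "y' \<in> V" "pth y' = pth x @ [e]" "walk E y' ds w" using pth_prefix[OF wV] by blast
    then have "walk E r (pth x @ [(x', a, y)]) y'" using pth[OF y'(1)] e by simp
    then have w1: "walk E r (pth x) x'" "(x', a, y) \<in> E" "y = y'" by (auto simp: walk_append)
    have xe1: "x' = x" using walk_end_unique[OF w1(1)] pth[OF Cons.prems(1)] by blast
    have xe: "x' = x" "(x, a, y) \<in> E" "y = y'" using xe1 w1 by auto
    have "d y = d x + 1" using y' xe e unfolding d_def by simp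
    then have "walk (induced_edges E Vn) y ds w" using Cons.IH[of y] y' xe Cons.prems e by auto
    then show ?case using xe e Cons.prems Vn y' \<open>d y = d x + 1\<close> by (auto simp: induced_edges_def)
  qed
  show ?thesis
    unfolding end_cone_nodes_def Vn_def[symmetric] Let_def
  proof safe
    fix w es assume "walk (induced_edges E Vn) u es w" then show "w \<in> desc u" using 1 by blast
  next
    fix w assume "w \<in> desc u"
    then obtain ds where "pth w = pth u @ ds" by (auto simp: desc_def)
    then show "\<exists>es. walk (induced_edges E Vn) u es w" using 2 uV \<open>w \<in> desc u\<close> desc_V by blast
  qed
qed

lemma frontier_eq: assumes uV: "u \<in> V" shows "frontier V E r u = {u}"
proof -
  have "w = u" if "w \<in> desc u" "level E r w = level E r u" for w
  proof -
    have "w \<in> V" using that(1) desc_V by blast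
    then have "d w = d u" using that(2) level_eq uV by simp
    then show ?thesis using desc_d_eq[OF that(1) uV] by simp
  qed
  then show ?thesis unfolding frontier_def end_cone_desc[OF uV] using desc_self[OF uV] level_eq uV by auto
qed

definition ind :: "'v set \<Rightarrow> ('v \<times> 'a \<times> 'v) set" where "ind S = induced_edges E S"

definition ciso :: "'v \<Rightarrow> 'v \<Rightarrow> ('v \<Rightarrow> 'v) \<Rightarrow> bool" where
  "ciso u v \<phi> \<longleftrightarrow> A_iso (desc u) (ind (desc u)) (desc v) (ind (desc v)) \<phi> \<and> \<phi> u = v"

lemma end_iso_eq: "u \<in> V \<Longrightarrow> v \<in> V \<Longrightarrow> end_isomorphic V E r u v \<longleftrightarrow> (\<exists>\<phi>. ciso u v \<phi>)"
  unfolding end_isomorphic_def ciso_def end_cone_edges_def ind_def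
  by (simp add: end_cone_desc frontier_eq)

lemma ciso_edge: "ciso u v \<phi> \<Longrightarrow> x \<in> desc u \<Longrightarrow> y \<in> desc u \<Longrightarrow> (x, a, y) \<in> E \<longleftrightarrow> (\<phi> x, a, \<phi> y) \<in> E"
  unfolding ciso_def A_iso_def ind_def induced_edges_def bij_betw_def by auto

end



lemma A_iso_id: "A_iso V E V E id"
  by (simp add: A_iso_def)

lemma A_iso_inv: "A_iso V E W F \<iota> \<Longrightarrow> A_iso W F V E (inv_into V \<iota>)"
  unfolding A_iso_def
proof (intro conjI ballI allI)
  assume h: "bij_betw \<iota> V W \<and> (\<forall>u\<in>V. \<forall>v\<in>V. \<forall>a. ((u, a, v) \<in> E) = ((\<iota> u, a, \<iota> v) \<in> F))"
  then show "bij_betw (inv_into V \<iota>) W V" using bij_betw_inv_into by blast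
  fix u v a assume u: "u \<in> W" and v: "v \<in> W"
  have "inv_into V \<iota> u \<in> V" "inv_into V \<iota> v \<in> V" "\<iota> (inv_into V \<iota> u) = u" "\<iota> (inv_into V \<iota> v) = v"
    using h u v by (auto simp: bij_betw_def inv_into_into f_inv_into_f)
  then show "((u, a, v) \<in> F) = ((inv_into V \<iota> u, a, inv_into V \<iota> v) \<in> E)" using h by metis
qed

lemma A_iso_comp: "A_iso V E W F \<iota> \<Longrightarrow> A_iso W F X G \<kappa> \<Longrightarrow> A_iso V E X G (\<kappa> \<circ> \<iota>)"
proof -
  assume h1: "A_iso V E W F \<iota>" and h2: "A_iso W F X G \<kappa>"
  have b: "bij_betw (\<kappa> \<circ> \<iota>) V X" using h1 h2 unfolding A_iso_def by (blast intro: bij_betw_trans)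
  have m: "\<iota> u \<in> W" if "u \<in> V" for u using h1 that unfolding A_iso_def bij_betw_def by blast
  show ?thesis unfolding A_iso_def using b h1 h2 m unfolding A_iso_def by simp
qed

context tree_ctx
begin

lemma child_pth: "u \<in> V \<Longrightarrow> (u, a, z) \<in> E \<Longrightarrow> z \<in> desc u \<Longrightarrow> z \<noteq> u \<Longrightarrow> pth z = pth u @ [(u, a, z)]"
proof -
  assume uV: "u \<in> V" and e: "(u, a, z) \<in> E" and zd: "z \<in> desc u" and ne: "z \<noteq> u"
  show ?thesis using edge_cases[OF e]
  proof
    assume "pth u = pth z @ [(z, iv a, u)]"
    then have "d u = d z + 1" unfolding d_def by simp
    then show ?thesis using desc_d[OF zd] by simp
  qed
qed

lemma parent_in_desc:
  assumes wd: "w \<in> desc x" and ne: "w \<noteq> x" and xV: "x \<in> V"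
  shows "\<exists>w' a. w' \<in> desc x \<and> (w', a, w) \<in> E \<and> pth w = pth w' @ [(w', a, w)] \<and> d w = d w' + 1"
proof -
  obtain ds where ds: "pth w = pth x @ ds" and wV: "w \<in> V" using wd by (auto simp: desc_def)
  have "ds \<noteq> []" using ds ne pth_inj[OF wV xV] by auto
  then have "pth w \<noteq> []" using ds by simp
  then obtain w' a where w': "w' \<in> V" "(w', a, w) \<in> E" "pth w = pth w' @ [(w', a, w)]" using pth_snoc[OF wV] by blast
  have "pth w' = pth x @ butlast ds" using w'(3) ds \<open>ds \<noteq> []\<close>
    by (metis butlast_append butlast_snoc)
  then have "w' \<in> desc x" using w' by (auto simp: desc_def)
  then show ?thesis using w' unfolding d_def by auto
qed

lemma ciso_refl: "u \<in> V \<Longrightarrow> ciso u u id"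
  unfolding ciso_def by (simp add: A_iso_id)

lemma ciso_sym: "u \<in> V \<Longrightarrow> ciso u v \<phi> \<Longrightarrow> ciso v u (inv_into (desc u) \<phi>)"
  unfolding ciso_def using A_iso_inv
  by (metis A_iso_def bij_betw_def desc_self inv_into_f_f)

lemma ciso_trans: "ciso u v \<phi> \<Longrightarrow> ciso v w \<psi> \<Longrightarrow> ciso u w (\<psi> \<circ> \<phi>)"
  unfolding ciso_def using A_iso_comp by fastforce

lemma ciso_bij: "ciso u v \<phi> \<Longrightarrow> bij_betw \<phi> (desc u) (desc v)"
  unfolding ciso_def A_iso_def by blast

lemma ciso_depth:
  assumes c: "ciso x x' \<phi>" and xV: "x \<in> V" and x'V: "x' \<in> V"
  shows "w \<in> desc x \<Longrightarrow> d (\<phi> w) + d x = d w + d x'"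
proof -
  have bij: "bij_betw \<phi> (desc x) (desc x')" using ciso_bij[OF c] .
  have fx: "\<phi> x = x'" using c by (simp add: ciso_def)
  have maps: "\<phi> y \<in> desc x'" if "y \<in> desc x" for y using bij that by (auto simp: bij_betw_def)
  have inj: "inj_on \<phi> (desc x)" using bij by (simp add: bij_betw_def)
  have "\<forall>w\<in>desc x. d w = d x + n \<longrightarrow> d (\<phi> w) = d x' + n" for n
  proof (induction n rule: less_induct)
    case (less n)
    show ?case
    proof (intro ballI impI)
      fix w assume wd: "w \<in> desc x" and dw: "d w = d x + n"
      show "d (\<phi> w) = d x' + n"
      proof (cases "n = 0")
        case True
        then have "w = x" using desc_d_eq[OF wd xV] dw by simp
        then show ?thesis using fx True by simp
      next
        case False
        then have wx: "w \<noteq> x" using dw by auto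
        obtain w' a where w': "w' \<in> desc x" "(w', a, w) \<in> E" "pth w = pth w' @ [(w', a, w)]" "d w = d w' + 1"
          using parent_in_desc[OF wd wx xV] by blast
        have "d w' = d x + (n - 1)" using w'(4) dw False by simp
        then have dw': "d (\<phi> w') = d x' + (n - 1)" using less.IH[of "n - 1"] False w'(1) by simp
        have e': "(\<phi> w', a, \<phi> w) \<in> E" using ciso_edge[OF c w'(1) wd] w'(2) by simp
        from edge_cases[OF e'] show ?thesis
        proof
          assume "pth (\<phi> w) = pth (\<phi> w') @ [(\<phi> w', a, \<phi> w)]"
          then show ?thesis using dw' False unfolding d_def by simp
        next
          assume up: "pth (\<phi> w') = pth (\<phi> w) @ [(\<phi> w, iv a, \<phi> w')]"
          then have du: "d (\<phi> w') = d (\<phi> w) + 1" unfolding d_def by simp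
          have "d x' \<le> d (\<phi> w)" using desc_d[OF maps[OF wd]] .
          then have n2: "n \<ge> 2" using du dw' False by simp
          then have w'x: "w' \<noteq> x" using w' dw by auto
          obtain w'' b where w'': "w'' \<in> desc x" "(w'', b, w') \<in> E" "pth w' = pth w'' @ [(w'', b, w')]" "d w' = d w'' + 1"
            using parent_in_desc[OF w'(1) w'x xV] by blast
          have "d w'' = d x + (n - 2)" using w''(4) w'(4) dw n2 by simp
          then have dw'': "d (\<phi> w'') = d x' + (n - 2)" using less.IH[of "n - 2"] n2 w''(1) by simp
          have e'': "(\<phi> w'', b, \<phi> w') \<in> E" using ciso_edge[OF c w''(1) w'(1)] w''(2) by simp
          have "pth (\<phi> w') = pth (\<phi> w'') @ [(\<phi> w'', b, \<phi> w')]"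
          proof -
            have "\<not> (pth (\<phi> w'') = pth (\<phi> w') @ [(\<phi> w', iv b, \<phi> w'')])"
            proof
              assume "pth (\<phi> w'') = pth (\<phi> w') @ [(\<phi> w', iv b, \<phi> w'')]"
              then have "d (\<phi> w'') = d (\<phi> w') + 1" unfolding d_def by simp
              then show False using dw'' dw' n2 by simp
            qed
            then show ?thesis using edge_cases[OF e''] by blast
          qed
          then have "pth (\<phi> w'') = pth (\<phi> w)" using up by simp
          then have "\<phi> w'' = \<phi> w" using pth_inj maps w''(1) wd desc_V by blast
          then have "w'' = w" using inj w''(1) wd by (simp add: inj_on_eq_iff)
          then show ?thesis using w'' w' by simp
        qed
      qed
    qed
  qed
  note all = this
  assume wd: "w \<in> desc x"
  have "d w = d x + (d w - d x)" using desc_d[OF wd] by simp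
  then have "d (\<phi> w) = d x' + (d w - d x)" using all[of "d w - d x"] wd by blast
  then show ?thesis using desc_d[OF wd] by simp
qed

lemma ciso_desc_sub:
  assumes c: "ciso x x' \<phi>" and xV: "x \<in> V" and x'V: "x' \<in> V" and zd: "z \<in> desc x"
  shows "\<phi> ` desc z \<subseteq> desc (\<phi> z)"
proof -
  have bij: "bij_betw \<phi> (desc x) (desc x')" using ciso_bij[OF c] .
  have maps: "\<phi> y \<in> desc x'" if "y \<in> desc x" for y using bij that by (auto simp: bij_betw_def)
  have zV: "z \<in> V" using zd desc_V by blast
  have "\<forall>w\<in>desc z. d w = d z + n \<longrightarrow> \<phi> w \<in> desc (\<phi> z)" for n
  proof (induction n)
    case 0
    show ?case
    proof (intro ballI impI)
      fix w assume "w \<in> desc z" "d w = d z + 0"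
      then have "w = z" using desc_d_eq zV by simp
      then show "\<phi> w \<in> desc (\<phi> z)" using desc_self maps[OF zd] desc_V by blast
    qed
  next
    case (Suc n)
    show ?case
    proof (intro ballI impI)
      fix w assume wd: "w \<in> desc z" and dw: "d w = d z + Suc n"
      then have wx: "w \<noteq> z" by (auto simp del: add_Suc_right)
      obtain w' a where w': "w' \<in> desc z" "(w', a, w) \<in> E" "pth w = pth w' @ [(w', a, w)]" "d w = d w' + 1"
        using parent_in_desc[OF wd wx zV] by blast
      have w'x: "w' \<in> desc x" "w \<in> desc x" using w'(1) wd zd desc_trans by blast+
      have "d w' = d z + n" using w'(4) dw by simp
      then have ih: "\<phi> w' \<in> desc (\<phi> z)" using Suc.IH w'(1) by blast
      have e': "(\<phi> w', a, \<phi> w) \<in> E" using ciso_edge[OF c w'x] w'(2) by simp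
      have dd: "d (\<phi> w) = d (\<phi> w') + 1" using ciso_depth[OF c xV x'V w'x(1)] ciso_depth[OF c xV x'V w'x(2)] w'(4) by simp
      have "pth (\<phi> w) = pth (\<phi> w') @ [(\<phi> w', a, \<phi> w)]" using edge_cases[OF e'] dd unfolding d_def by auto
      moreover obtain ds where "pth (\<phi> w') = pth (\<phi> z) @ ds" using ih by (auto simp: desc_def)
      moreover have "\<phi> w \<in> V" using maps[OF w'x(2)] desc_V by blast
      ultimately show "\<phi> w \<in> desc (\<phi> z)" unfolding desc_def by force
    qed
  qed
  note all = this
  show ?thesis
  proof
    fix y assume "y \<in> \<phi> ` desc z"
    then obtain w where w: "w \<in> desc z" "y = \<phi> w" by blast
    have "d w = d z + (d w - d z)" using desc_d[OF w(1)] by simp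
    then show "y \<in> desc (\<phi> z)" using all[of "d w - d z"] w by blast
  qed
qed

lemma ciso_restrict:
  assumes c: "ciso x x' \<phi>" and xV: "x \<in> V" and x'V: "x' \<in> V" and zd: "z \<in> desc x"
  shows "ciso z (\<phi> z) \<phi>"
proof -
  have bij: "bij_betw \<phi> (desc x) (desc x')" using ciso_bij[OF c] .
  define \<psi> where "\<psi> = inv_into (desc x) \<phi>"
  have c': "ciso x' x \<psi>" using ciso_sym[OF xV c] \<psi>_def by simp
  have fz: "\<phi> z \<in> desc x'" using bij zd by (auto simp: bij_betw_def)
  have pz: "\<psi> (\<phi> z) = z" using bij zd unfolding \<psi>_def by (simp add: bij_betw_def)
  have sub1: "\<phi> ` desc z \<subseteq> desc (\<phi> z)" using ciso_desc_sub[OF c xV x'V zd] .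
  have sub2: "\<psi> ` desc (\<phi> z) \<subseteq> desc z" using ciso_desc_sub[OF c' x'V xV fz] pz by simp
  have eq: "\<phi> ` desc z = desc (\<phi> z)"
  proof
    show "desc (\<phi> z) \<subseteq> \<phi> ` desc z"
    proof
      fix y assume y: "y \<in> desc (\<phi> z)"
      then have yx: "y \<in> desc x'" using fz desc_trans by blast
      then have "\<phi> (\<psi> y) = y" using bij unfolding \<psi>_def by (simp add: bij_betw_def f_inv_into_f)
      then show "y \<in> \<phi> ` desc z" using sub2 y by (metis image_eqI image_subset_iff)
    qed
  qed (rule sub1)
  have zsub: "desc z \<subseteq> desc x" using zd desc_trans by blast
  have bz: "bij_betw \<phi> (desc z) (desc (\<phi> z))"
    using bij zsub eq by (auto simp: bij_betw_def intro: inj_on_subset)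
  have "\<forall>u\<in>desc z. \<forall>v\<in>desc z. \<forall>a. ((u, a, v) \<in> ind (desc z)) = ((\<phi> u, a, \<phi> v) \<in> ind (desc (\<phi> z)))"
  proof (intro ballI allI)
    fix u v a assume u: "u \<in> desc z" and v: "v \<in> desc z"
    have "\<phi> u \<in> desc (\<phi> z)" "\<phi> v \<in> desc (\<phi> z)" using u v eq by auto
    moreover have "(u, a, v) \<in> E \<longleftrightarrow> (\<phi> u, a, \<phi> v) \<in> E" using ciso_edge[OF c] u v zsub by blast
    ultimately show "((u, a, v) \<in> ind (desc z)) = ((\<phi> u, a, \<phi> v) \<in> ind (desc (\<phi> z)))"
      using u v by (auto simp: ind_def induced_edges_def)
  qed
  then show ?thesis using bz by (simp add: ciso_def A_iso_def)
qed

definition eiso :: "'v \<Rightarrow> 'v \<Rightarrow> bool" where "eiso u v \<longleftrightarrow> (\<exists>\<phi>. ciso u v \<phi>)"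

lemma eiso_refl: "u \<in> V \<Longrightarrow> eiso u u" unfolding eiso_def using ciso_refl by blast
lemma eiso_sym: "u \<in> V \<Longrightarrow> eiso u v \<Longrightarrow> eiso v u" unfolding eiso_def using ciso_sym by blast
lemma eiso_trans: "eiso u v \<Longrightarrow> eiso v w \<Longrightarrow> eiso u w" unfolding eiso_def using ciso_trans by blast

lemma ciso_V: assumes c: "ciso u v \<phi>" and uV: "u \<in> V" shows "v \<in> V"
proof -
  have "\<phi> u = v" using c by (simp add: ciso_def)
  moreover have "\<phi> u \<in> desc v" using ciso_bij[OF c] desc_self[OF uV] by (auto simp: bij_betw_def)
  ultimately show ?thesis using desc_V by blast
qed

end



lemma runs_Nil[simp]: "[] \<in> runs T \<alpha> \<omega> p"
  by (simp add: runs_def)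

lemma runs_Cons: "\<tau> # \<sigma> \<in> runs T \<alpha> \<omega> p \<longleftrightarrow> \<tau> \<in> T \<and> \<alpha> \<tau> = p \<and> \<sigma> \<in> runs T \<alpha> \<omega> (\<omega> \<tau>)"
  unfolding runs_def
proof (simp, intro iffI conjI)
  assume h: "\<tau> \<in> T \<and> set \<sigma> \<subseteq> T \<and> \<alpha> \<tau> = p \<and> (\<forall>i. i < length \<sigma> \<longrightarrow> \<omega> ((\<tau> # \<sigma>) ! i) = \<alpha> (\<sigma> ! i))"
  then show "\<sigma> \<noteq> [] \<longrightarrow> \<alpha> (hd \<sigma>) = \<omega> \<tau>" by (cases \<sigma>) force+
  show "\<forall>i. Suc i < length \<sigma> \<longrightarrow> \<omega> (\<sigma> ! i) = \<alpha> (\<sigma> ! Suc i)"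
  proof (intro allI impI)
    fix i assume "Suc i < length \<sigma>"
    then show "\<omega> (\<sigma> ! i) = \<alpha> (\<sigma> ! Suc i)" using h[THEN conjunct2, THEN conjunct2, THEN conjunct2, rule_format, of "Suc i"] by simp
  qed
next
  assume h: "\<tau> \<in> T \<and> \<alpha> \<tau> = p \<and> set \<sigma> \<subseteq> T \<and> (\<sigma> \<noteq> [] \<longrightarrow> \<alpha> (hd \<sigma>) = \<omega> \<tau>) \<and> (\<forall>i. Suc i < length \<sigma> \<longrightarrow> \<omega> (\<sigma> ! i) = \<alpha> (\<sigma> ! Suc i))"
  show "\<forall>i<length \<sigma>. \<omega> ((\<tau> # \<sigma>) ! i) = \<alpha> (\<sigma> ! i)"
  proof (intro allI impI)
    fix i assume i: "i < length \<sigma>"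
    show "\<omega> ((\<tau> # \<sigma>) ! i) = \<alpha> (\<sigma> ! i)"
    proof (cases i)
      case 0 then show ?thesis using h i by (cases \<sigma>) auto
    next
      case (Suc j) then show ?thesis using h i by auto
    qed
  qed
qed simp_all

lemma end_state_Cons: "end_state \<omega> p (\<tau> # \<sigma>) = end_state \<omega> (\<omega> \<tau>) \<sigma>"
  by (simp add: end_state_def)

lemma end_state_append: "end_state \<omega> p (\<rho> @ \<sigma>) = end_state \<omega> (end_state \<omega> p \<rho>) \<sigma>"
  by (induction \<rho> arbitrary: p) (auto simp: end_state_Cons, simp add: end_state_def)

lemma end_state_snoc[simp]: "end_state \<omega> p (\<rho> @ [\<tau>]) = \<omega> \<tau>"
  by (simp add: end_state_def)

lemma end_state_Nil[simp]: "end_state \<omega> p [] = p"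
  by (simp add: end_state_def)

lemma runs_append: "\<rho> @ \<sigma> \<in> runs T \<alpha> \<omega> p \<longleftrightarrow> \<rho> \<in> runs T \<alpha> \<omega> p \<and> \<sigma> \<in> runs T \<alpha> \<omega> (end_state \<omega> p \<rho>)"
  by (induction \<rho> arbitrary: p) (auto simp: runs_Cons end_state_Cons)

lemma runs_snoc: "\<rho> @ [\<tau>] \<in> runs T \<alpha> \<omega> p \<longleftrightarrow> \<rho> \<in> runs T \<alpha> \<omega> p \<and> \<tau> \<in> T \<and> \<alpha> \<tau> = end_state \<omega> p \<rho>"
  by (simp add: runs_append runs_Cons)

lemma run_edges_iff: "(\<rho>1, a, \<rho>2) \<in> run_edges iv T \<alpha> lb \<omega> p \<longleftrightarrow>
   (\<exists>\<tau>. \<rho>2 = \<rho>1 @ [\<tau>] \<and> \<rho>2 \<in> runs T \<alpha> \<omega> p \<and> a = lb \<tau>) \<or>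
   (\<exists>\<tau>. \<rho>1 = \<rho>2 @ [\<tau>] \<and> \<rho>1 \<in> runs T \<alpha> \<omega> p \<and> a = iv (lb \<tau>))"
proof
  assume "(\<rho>1, a, \<rho>2) \<in> run_edges iv T \<alpha> lb \<omega> p"
  then show "(\<exists>\<tau>. \<rho>2 = \<rho>1 @ [\<tau>] \<and> \<rho>2 \<in> runs T \<alpha> \<omega> p \<and> a = lb \<tau>) \<or>
   (\<exists>\<tau>. \<rho>1 = \<rho>2 @ [\<tau>] \<and> \<rho>1 \<in> runs T \<alpha> \<omega> p \<and> a = iv (lb \<tau>))"
    unfolding run_edges_def inv_closure_def by (auto simp: inv_edge_def)
next
  assume "(\<exists>\<tau>. \<rho>2 = \<rho>1 @ [\<tau>] \<and> \<rho>2 \<in> runs T \<alpha> \<omega> p \<and> a = lb \<tau>) \<or>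
   (\<exists>\<tau>. \<rho>1 = \<rho>2 @ [\<tau>] \<and> \<rho>1 \<in> runs T \<alpha> \<omega> p \<and> a = iv (lb \<tau>))"
  then show "(\<rho>1, a, \<rho>2) \<in> run_edges iv T \<alpha> lb \<omega> p"
  proof
    assume "\<exists>\<tau>. \<rho>2 = \<rho>1 @ [\<tau>] \<and> \<rho>2 \<in> runs T \<alpha> \<omega> p \<and> a = lb \<tau>"
    then obtain \<tau> where h: "\<rho>2 = \<rho>1 @ [\<tau>]" "\<rho>2 \<in> runs T \<alpha> \<omega> p" "a = lb \<tau>" by blast
    then have "\<tau> \<in> T" "\<rho>1 \<in> runs T \<alpha> \<omega> p" by (simp_all add: runs_snoc)
    then show ?thesis unfolding run_edges_def inv_closure_def using h by blast
  next
    assume "\<exists>\<tau>. \<rho>1 = \<rho>2 @ [\<tau>] \<and> \<rho>1 \<in> runs T \<alpha> \<omega> p \<and> a = iv (lb \<tau>)"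
    then obtain \<tau> where h: "\<rho>1 = \<rho>2 @ [\<tau>]" "\<rho>1 \<in> runs T \<alpha> \<omega> p" "a = iv (lb \<tau>)" by blast
    then have "\<tau> \<in> T" "\<rho>2 \<in> runs T \<alpha> \<omega> p" by (simp_all add: runs_snoc)
    then have "(\<rho>2, lb \<tau>, \<rho>1) \<in> {(\<rho>, lb \<tau>, \<rho> @ [\<tau>]) |\<rho> \<tau>. \<tau> \<in> T \<and> \<rho> \<in> runs T \<alpha> \<omega> p \<and> \<rho> @ [\<tau>] \<in> runs T \<alpha> \<omega> p}"
      using h by blast
    moreover have "(\<rho>1, a, \<rho>2) = inv_edge iv (\<rho>2, lb \<tau>, \<rho>1)" using h by simp
    ultimately show ?thesis unfolding run_edges_def inv_closure_def by blast
  qed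
qed

lemma run_edges_shift:
  assumes "\<rho> @ \<sigma>1 \<in> runs T \<alpha> \<omega> p" "\<rho> @ \<sigma>2 \<in> runs T \<alpha> \<omega> p"
    "\<rho>' @ \<sigma>1 \<in> runs T \<alpha> \<omega> p" "\<rho>' @ \<sigma>2 \<in> runs T \<alpha> \<omega> p"
  shows "(\<rho> @ \<sigma>1, a, \<rho> @ \<sigma>2) \<in> run_edges iv T \<alpha> lb \<omega> p \<longleftrightarrow> (\<rho>' @ \<sigma>1, a, \<rho>' @ \<sigma>2) \<in> run_edges iv T \<alpha> lb \<omega> p"
  using assms unfolding run_edges_iff by auto

lemma end_state_in: "mNFA A Q T \<alpha> lb \<omega> \<Longrightarrow> p \<in> Q \<Longrightarrow> \<rho> \<in> runs T \<alpha> \<omega> p \<Longrightarrow> end_state \<omega> p \<rho> \<in> Q"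
  unfolding end_state_def mNFA_def runs_def
  by (cases "\<rho> = []") (auto dest!: last_in_set)

context tree_ctx
begin

lemma dir1:
  assumes m: "mNFA A Q T \<alpha> lb \<omega>" and pQ: "p \<in> Q"
    and iso: "A_iso V E (runs T \<alpha> \<omega> p) (run_edges iv T \<alpha> lb \<omega> p) \<iota>" and ir: "\<iota> r = []"
  shows "bounded_degree V E \<and> finite ((\<lambda>v. {w\<in>V. end_isomorphic V E r w v}) ` V)"
proof -
  define R where "R = runs T \<alpha> \<omega> p"
  define RE where "RE = run_edges iv T \<alpha> lb \<omega> p"
  define J where "J = inv_into V \<iota>"
  have bij: "bij_betw \<iota> V R" using iso unfolding A_iso_def R_def by blast
  have iR: "\<iota> v \<in> R" if "v \<in> V" for v using bij that by (auto simp: bij_betw_def)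
  have JV: "J \<rho> \<in> V" "\<iota> (J \<rho>) = \<rho>" if "\<rho> \<in> R" for \<rho>
    using bij that unfolding J_def by (auto simp: bij_betw_def inv_into_into f_inv_into_f)
  have Ji: "J (\<iota> v) = v" if "v \<in> V" for v using bij that unfolding J_def by (simp add: bij_betw_def)
  have edge: "(u, a, v) \<in> E \<longleftrightarrow> (\<iota> u, a, \<iota> v) \<in> RE" if "u \<in> V" "v \<in> V" for u v a
    using iso that unfolding A_iso_def RE_def by blast
  have finT: "finite T" using m by (simp add: mNFA_def)
  have bd: "bounded_degree V E"
    unfolding bounded_degree_def
  proof (intro exI ballI)
    fix v assume vV: "v \<in> V"
    have sub: "{e\<in>E. fst e = v} \<subseteq> (\<lambda>\<tau>. (v, lb \<tau>, J (\<iota> v @ [\<tau>]))) ` T \<union> (\<lambda>\<tau>. (v, iv (lb \<tau>), J (butlast (\<iota> v)))) ` T"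
    proof
      fix e assume e: "e \<in> {e\<in>E. fst e = v}"
      then obtain a w where ew: "e = (v, a, w)" "(v, a, w) \<in> E" by (cases e) auto
      have wV: "w \<in> V" using edgeV[OF ew(2)] by simp
      have "(\<iota> v, a, \<iota> w) \<in> RE" using edge[OF vV wV] ew by simp
      then consider \<tau> where "\<iota> w = \<iota> v @ [\<tau>]" "\<iota> w \<in> R" "a = lb \<tau>"
        | \<tau> where "\<iota> v = \<iota> w @ [\<tau>]" "\<iota> v \<in> R" "a = iv (lb \<tau>)"
        unfolding RE_def R_def run_edges_iff by blast
      then show "e \<in> (\<lambda>\<tau>. (v, lb \<tau>, J (\<iota> v @ [\<tau>]))) ` T \<union> (\<lambda>\<tau>. (v, iv (lb \<tau>), J (butlast (\<iota> v)))) ` T"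
      proof cases
        case 1
        then have "\<tau> \<in> T" unfolding R_def by (simp add: runs_snoc)
        moreover have "w = J (\<iota> v @ [\<tau>])" using 1 Ji[OF wV] by simp
        ultimately show ?thesis using ew 1 by auto
      next
        case 2
        then have "\<tau> \<in> T" unfolding R_def by (simp add: runs_snoc)
        moreover have "w = J (butlast (\<iota> v))" using 2 Ji[OF wV] by simp
        ultimately show ?thesis using ew 2 by auto
      qed
    qed
    have fin: "finite ((\<lambda>\<tau>. (v, lb \<tau>, J (\<iota> v @ [\<tau>]))) ` T \<union> (\<lambda>\<tau>. (v, iv (lb \<tau>), J (butlast (\<iota> v)))) ` T)"
      using finT by simp
    show "finite {e\<in>E. fst e = v} \<and> card {e\<in>E. fst e = v} \<le> card T + card T"
    proof
      show "finite {e\<in>E. fst e = v}" using finite_subset[OF sub fin] .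
      have "card {e\<in>E. fst e = v} \<le> card ((\<lambda>\<tau>. (v, lb \<tau>, J (\<iota> v @ [\<tau>]))) ` T \<union> (\<lambda>\<tau>. (v, iv (lb \<tau>), J (butlast (\<iota> v)))) ` T)"
        using card_mono[OF fin sub] .
      also have "\<dots> \<le> card T + card T"
        by (rule order.trans[OF card_Un_le add_mono[OF card_image_le[OF finT] card_image_le[OF finT]]])
      finally show "card {e\<in>E. fst e = v} \<le> card T + card T" .
    qed
  qed
  have dl: "\<forall>w\<in>V. d w = n \<longrightarrow> length (\<iota> w) = n" for n
  proof (induction n rule: less_induct)
    case (less n)
    show ?case
    proof (intro ballI impI)
      fix w assume wV: "w \<in> V" and dw: "d w = n"
      show "length (\<iota> w) = n"
      proof (cases "n = 0")
        case True
        then have "w = r" using pth_Nil[OF wV] dw unfolding d_def by simp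
        then show ?thesis using ir True by simp
      next
        case False
        then have "pth w \<noteq> []" using dw unfolding d_def by auto
        then obtain x a where x: "x \<in> V" "(x, a, w) \<in> E" "pth w = pth x @ [(x, a, w)]"
          using pth_snoc[OF wV] by blast
        have dx: "d x = n - 1" using x(3) dw unfolding d_def by simp
        have lx: "length (\<iota> x) = n - 1" using less.IH[of "n - 1"] False x(1) dx by simp
        have "(\<iota> x, a, \<iota> w) \<in> RE" using edge[OF x(1) wV] x(2) by simp
        then consider \<tau> where "\<iota> w = \<iota> x @ [\<tau>]"
          | \<tau> where "\<iota> x = \<iota> w @ [\<tau>]"
          unfolding RE_def run_edges_iff by blast
        then show ?thesis
        proof cases
          case 1 then show ?thesis using lx False by simp
        next
          case 2
          then have lw: "length (\<iota> w) + 1 = n - 1" using lx by simp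
          then have n2: "n \<ge> 2" by simp
          then have "pth x \<noteq> []" using dx unfolding d_def by auto
          then obtain z b where z: "z \<in> V" "(z, b, x) \<in> E" "pth x = pth z @ [(z, b, x)]"
            using pth_snoc[OF x(1)] by blast
          have dz: "d z = n - 2" using z(3) dx unfolding d_def by simp
          have lz: "length (\<iota> z) = n - 2" using less.IH[of "n - 2"] n2 z(1) dz by simp
          have "(\<iota> z, b, \<iota> x) \<in> RE" using edge[OF z(1) x(1)] z(2) by simp
          then consider \<tau>' where "\<iota> x = \<iota> z @ [\<tau>']"
            | \<tau>' where "\<iota> z = \<iota> x @ [\<tau>']"
            unfolding RE_def run_edges_iff by blast
          then show ?thesis
          proof cases
            case 1
            then have "\<iota> z = \<iota> w" using 2 by simp
            then have "z = w" using Ji z(1) wV by metis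
            then show ?thesis using dz dw n2 by simp
          next
            case 2 then show ?thesis using lz lx n2 by simp
          qed
        qed
      qed
    qed
  qed
  note dl = this
  have dlen: "d w = length (\<iota> w)" if "w \<in> V" for w using dl[of "d w"] that by simp
  have down: "\<exists>\<tau>. \<iota> w = \<iota> x @ [\<tau>]" if "x \<in> V" "w \<in> V" "(x, a, w) \<in> E" "pth w = pth x @ [(x, a, w)]" for x w a
  proof -
    have "(\<iota> x, a, \<iota> w) \<in> RE" using edge that by blast
    moreover have "d w = d x + 1" using that(4) unfolding d_def by simp
    then have "length (\<iota> w) = length (\<iota> x) + 1" using dlen that(1,2) by simp
    ultimately show ?thesis unfolding RE_def run_edges_iff by auto
  qed
  have desc1: "\<forall>w\<in>desc u. d w = d u + n \<longrightarrow> (\<exists>\<sigma>. \<iota> w = \<iota> u @ \<sigma>)" if uV: "u \<in> V" for u n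
  proof (induction n)
    case 0
    show ?case
    proof (intro ballI impI)
      fix w assume "w \<in> desc u" "d w = d u + 0"
      then have "w = u" using desc_d_eq uV by simp
      then show "\<exists>\<sigma>. \<iota> w = \<iota> u @ \<sigma>" by blast
    qed
  next
    case (Suc n)
    show ?case
    proof (intro ballI impI)
      fix w assume wd: "w \<in> desc u" and dw: "d w = d u + Suc n"
      then have wx: "w \<noteq> u" by (auto simp del: add_Suc_right)
      obtain w' a where w': "w' \<in> desc u" "(w', a, w) \<in> E" "pth w = pth w' @ [(w', a, w)]" "d w = d w' + 1"
        using parent_in_desc[OF wd wx uV] by blast
      have "d w' = d u + n" using w'(4) dw by simp
      then obtain \<sigma> where "\<iota> w' = \<iota> u @ \<sigma>" using Suc.IH w'(1) by blast
      moreover obtain \<tau> where "\<iota> w = \<iota> w' @ [\<tau>]" using down[of w' w a] w' wd desc_V by blast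
      ultimately show "\<exists>\<sigma>. \<iota> w = \<iota> u @ \<sigma>" by simp
    qed
  qed
  have desc2: "\<forall>w\<in>V. \<iota> w = \<iota> u @ \<sigma> \<longrightarrow> w \<in> desc u" if uV: "u \<in> V" for u \<sigma>
  proof (induction \<sigma> rule: rev_induct)
    case Nil
    show ?case
    proof (intro ballI impI)
      fix w assume "w \<in> V" "\<iota> w = \<iota> u @ []"
      then have "J (\<iota> w) = J (\<iota> u)" by simp
      then have "w = u" using Ji \<open>w \<in> V\<close> uV by simp
      then show "w \<in> desc u" using desc_self uV by simp
    qed
  next
    case (snoc \<tau> \<sigma>)
    show ?case
    proof (intro ballI impI)
      fix w assume wV: "w \<in> V" and iw: "\<iota> w = \<iota> u @ \<sigma> @ [\<tau>]"
      have h: "(\<iota> u @ \<sigma>) @ [\<tau>] \<in> runs T \<alpha> \<omega> p" using iR[OF wV] iw R_def by simp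
      have inR: "\<iota> u @ \<sigma> \<in> R" using runs_snoc[THEN iffD1, OF h] R_def by simp
      define x where "x = J (\<iota> u @ \<sigma>)"
      have xV: "x \<in> V" and ix: "\<iota> x = \<iota> u @ \<sigma>" using JV[OF inR] x_def by auto
      have xd: "x \<in> desc u" using snoc.IH xV ix by blast
      have "(\<iota> x, lb \<tau>, \<iota> w) \<in> RE" unfolding RE_def run_edges_iff using iw ix iR[OF wV] R_def by auto
      then have e: "(x, lb \<tau>, w) \<in> E" using edge[OF xV wV] by simp
      from edge_cases[OF e] show "w \<in> desc u"
      proof
        assume "pth w = pth x @ [(x, lb \<tau>, w)]"
        then show ?thesis using xd wV by (auto simp: desc_def)
      next
        assume "pth x = pth w @ [(w, iv (lb \<tau>), x)]"
        then have "d x = d w + 1" unfolding d_def by simp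
        moreover have "length (\<iota> w) = length (\<iota> x) + 1" using iw ix by simp
        ultimately show ?thesis using dlen xV wV by simp
      qed
    qed
  qed
  have desc_iff: "w \<in> desc u \<longleftrightarrow> (\<exists>\<sigma>. \<iota> w = \<iota> u @ \<sigma>)" if "u \<in> V" "w \<in> V" for u w
  proof
    assume wd: "w \<in> desc u"
    have "d w = d u + (d w - d u)" using desc_d[OF wd] by simp
    then show "\<exists>\<sigma>. \<iota> w = \<iota> u @ \<sigma>" using desc1[OF that(1), of "d w - d u"] wd by blast
  next
    assume "\<exists>\<sigma>. \<iota> w = \<iota> u @ \<sigma>"
    then show "w \<in> desc u" using desc2[OF that(1)] that(2) by blast
  qed
  have same: "eiso u v" if uV: "u \<in> V" and vV: "v \<in> V" and st: "end_state \<omega> p (\<iota> u) = end_state \<omega> p (\<iota> v)" for u v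
  proof -
    define f where "f x y w = J (\<iota> y @ drop (length (\<iota> x)) (\<iota> w))" for x y w
    have fapp: "f x y w = J (\<iota> y @ drop (length (\<iota> x)) (\<iota> w))" for x y w by (simp add: f_def)
    have fprop: "f x y w \<in> desc y \<and> \<iota> (f x y w) = \<iota> y @ drop (length (\<iota> x)) (\<iota> w) \<and> \<iota> w = \<iota> x @ drop (length (\<iota> x)) (\<iota> w)"
      if xV: "x \<in> V" and yV: "y \<in> V" and sxy: "end_state \<omega> p (\<iota> x) = end_state \<omega> p (\<iota> y)" and wd: "w \<in> desc x" for x y w
    proof -
      have wV: "w \<in> V" using wd desc_V by blast
      obtain \<sigma> where s: "\<iota> w = \<iota> x @ \<sigma>" using desc_iff[OF xV wV] wd by blast
      have dr: "drop (length (\<iota> x)) (\<iota> w) = \<sigma>" using s by simp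
      have "\<sigma> \<in> runs T \<alpha> \<omega> (end_state \<omega> p (\<iota> x))" using iR[OF wV] s unfolding R_def by (simp add: runs_append)
      then have "\<iota> y @ \<sigma> \<in> R" using iR[OF yV] sxy unfolding R_def by (simp add: runs_append)
      then have "f x y w \<in> V" "\<iota> (f x y w) = \<iota> y @ \<sigma>" using JV unfolding f_def dr by auto
      then show ?thesis using desc_iff[OF yV] s dr by auto
    qed
    have b: "bij_betw (f u v) (desc u) (desc v)"
    proof (rule bij_betw_byWitness[where f'="f v u"])
      show "\<forall>a\<in>desc u. f v u (f u v a) = a"
      proof
        fix w assume wd: "w \<in> desc u"
        have h1: "f u v w \<in> desc v" "\<iota> (f u v w) = \<iota> v @ drop (length (\<iota> u)) (\<iota> w)" "\<iota> w = \<iota> u @ drop (length (\<iota> u)) (\<iota> w)"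
          using fprop[OF uV vV st wd] by auto
        have "f v u (f u v w) = J (\<iota> u @ drop (length (\<iota> u)) (\<iota> w))" using fapp[of v u "f u v w"] h1(2) by simp
        also have "\<dots> = J (\<iota> w)" using h1(3) by simp
        finally show "f v u (f u v w) = w" using Ji wd desc_V by auto
      qed
      show "\<forall>a\<in>desc v. f u v (f v u a) = a"
      proof
        fix w assume wd: "w \<in> desc v"
        have h1: "f v u w \<in> desc u" "\<iota> (f v u w) = \<iota> u @ drop (length (\<iota> v)) (\<iota> w)" "\<iota> w = \<iota> v @ drop (length (\<iota> v)) (\<iota> w)"
          using fprop[OF vV uV st[symmetric] wd] by auto
        have "f u v (f v u w) = J (\<iota> v @ drop (length (\<iota> v)) (\<iota> w))" using fapp[of u v "f v u w"] h1(2) by simp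
        also have "\<dots> = J (\<iota> w)" using h1(3) by simp
        finally show "f u v (f v u w) = w" using Ji wd desc_V by auto
      qed
      show "f u v ` desc u \<subseteq> desc v" using fprop[OF uV vV st] by auto
      show "f v u ` desc v \<subseteq> desc u" using fprop[OF vV uV st[symmetric]] by auto
    qed
    have ed: "((w1, a, w2) \<in> ind (desc u)) = ((f u v w1, a, f u v w2) \<in> ind (desc v))"
      if w1: "w1 \<in> desc u" and w2: "w2 \<in> desc u" for w1 w2 a
    proof -
      note h1 = fprop[OF uV vV st w1] and h2 = fprop[OF uV vV st w2]
      have V1: "w1 \<in> V" "w2 \<in> V" "f u v w1 \<in> V" "f u v w2 \<in> V" using w1 w2 h1 h2 desc_V by auto
      have "(w1, a, w2) \<in> E \<longleftrightarrow> (\<iota> w1, a, \<iota> w2) \<in> RE" using edge V1 by blast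
      also have "\<dots> \<longleftrightarrow> (\<iota> (f u v w1), a, \<iota> (f u v w2)) \<in> RE"
      proof -
        define s1 where "s1 = drop (length (\<iota> u)) (\<iota> w1)"
        define s2 where "s2 = drop (length (\<iota> u)) (\<iota> w2)"
        have e1: "\<iota> w1 = \<iota> u @ s1" "\<iota> w2 = \<iota> u @ s2" "\<iota> (f u v w1) = \<iota> v @ s1" "\<iota> (f u v w2) = \<iota> v @ s2"
          using h1 h2 s1_def s2_def by auto
        have "\<iota> u @ s1 \<in> R" "\<iota> u @ s2 \<in> R" "\<iota> v @ s1 \<in> R" "\<iota> v @ s2 \<in> R"
          using iR V1 e1 by metis+
        then show ?thesis unfolding e1 RE_def R_def by (rule run_edges_shift)
      qed
      also have "\<dots> \<longleftrightarrow> (f u v w1, a, f u v w2) \<in> E" using edge V1 by blast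
      finally show ?thesis using w1 w2 h1 h2 by (auto simp: ind_def induced_edges_def)
    qed
    have "f u v u = v" unfolding f_def using Ji[OF vV] by simp
    then have "ciso u v (f u v)" unfolding ciso_def A_iso_def using b ed by blast
    then show ?thesis unfolding eiso_def by blast
  qed
  define cls where "cls v = {w\<in>V. end_isomorphic V E r w v}" for v
  have cls_eq: "cls u = cls v" if "u \<in> V" "v \<in> V" "eiso u v" for u v
  proof -
    have "end_isomorphic V E r x u \<longleftrightarrow> end_isomorphic V E r x v" if xV: "x \<in> V" for x
    proof -
      have "end_isomorphic V E r x u \<longleftrightarrow> eiso x u" using end_iso_eq[OF xV \<open>u \<in> V\<close>] eiso_def by simp
      also have "\<dots> \<longleftrightarrow> eiso x v" using eiso_trans[OF _ \<open>eiso u v\<close>] eiso_trans[OF _ eiso_sym[OF \<open>u \<in> V\<close> \<open>eiso u v\<close>]] by blast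
      also have "\<dots> \<longleftrightarrow> end_isomorphic V E r x v" using end_iso_eq[OF xV \<open>v \<in> V\<close>] eiso_def by simp
      finally show ?thesis .
    qed
    then show ?thesis unfolding cls_def by blast
  qed
  define F where "F q = cls (SOME w. w \<in> V \<and> end_state \<omega> p (\<iota> w) = q)" for q
  have "cls ` V \<subseteq> F ` Q"
  proof
    fix c assume "c \<in> cls ` V"
    then obtain v where vV: "v \<in> V" and c: "c = cls v" by blast
    define q where "q = end_state \<omega> p (\<iota> v)"
    have qQ: "q \<in> Q" using end_state_in[OF m pQ] iR[OF vV] unfolding q_def R_def by blast
    define w where "w = (SOME w. w \<in> V \<and> end_state \<omega> p (\<iota> w) = q)"
    have "w \<in> V \<and> end_state \<omega> p (\<iota> w) = q" unfolding w_def by (rule someI[of _ v]) (simp add: vV q_def)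
    then have "cls w = cls v" using same[of w v] cls_eq[of w v] vV q_def by simp
    then show "c \<in> F ` Q" using qQ c unfolding F_def w_def by auto
  qed
  moreover have "finite Q" using m by (simp add: mNFA_def)
  ultimately have "finite (cls ` V)" using finite_subset by blast
  then show ?thesis using bd unfolding cls_def by simp
qed

end



context tree_ctx
begin

lemma dir2:
  assumes bd: "bounded_degree V E" and fin: "finite ((\<lambda>v. {w\<in>V. end_isomorphic V E r w v}) ` V)"
  shows "regular_rooted A iv V E r"
proof -
  define cls where "cls v = {w\<in>V. end_isomorphic V E r w v}" for v
  define C where "C = cls ` V"
  define Q where "Q = {0..<card C}"
  have finC: "finite C" using fin unfolding C_def cls_def by simp
  obtain g where g: "bij_betw g C Q" using ex_bij_betw_finite_nat[OF finC] Q_def by blast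
  define st where "st v = g (cls v)" for v
  have stQ: "st v \<in> Q" if "v \<in> V" for v using g that unfolding st_def C_def bij_betw_def by auto
  have cls_iff: "w \<in> cls v \<longleftrightarrow> w \<in> V \<and> eiso w v" if "v \<in> V" for w v
    unfolding cls_def eiso_def using end_iso_eq that by auto
  have st_eiso: "eiso u v" if "u \<in> V" "v \<in> V" "st u = st v" for u v
  proof -
    have "cls u = cls v" using g that unfolding st_def C_def bij_betw_def by (auto dest: inj_onD)
    moreover have "u \<in> cls u" using cls_iff[OF that(1)] eiso_refl that(1) by blast
    ultimately show ?thesis using cls_iff[OF that(2)] by blast
  qed
  have eiso_st: "st u = st v" if "u \<in> V" "v \<in> V" "eiso u v" for u v
  proof -
    have "w \<in> cls u \<longleftrightarrow> w \<in> cls v" for w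
      using cls_iff that eiso_trans eiso_sym by metis
    then show ?thesis unfolding st_def by (metis equalityI subsetI)
  qed
  define rep where "rep q = (SOME v. v \<in> V \<and> st v = q)" for q
  have rep: "rep q \<in> V \<and> st (rep q) = q" if qQ: "q \<in> Q" for q
  proof -
    obtain c where c: "c \<in> C" "g c = q" using g qQ unfolding bij_betw_def by auto
    then obtain v where "v \<in> V" "st v = q" unfolding C_def st_def by auto
    then have "v \<in> V \<and> st v = q" by simp
    then show ?thesis unfolding rep_def by (rule someI)
  qed
  define J where "J x = (SOME \<phi>. ciso (rep (st x)) x \<phi>)" for x
  have J: "ciso (rep (st x)) x (J x)" if "x \<in> V" for x
  proof -
    have "eiso (rep (st x)) x" using rep[OF stQ[OF that]] st_eiso that by auto
    then show ?thesis unfolding eiso_def J_def by (rule someI_ex)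
  qed
  define Tr where "Tr = {(q, e). q \<in> Q \<and> e \<in> E \<and> fst e = rep q \<and> snd (snd e) \<in> desc (rep q) \<and> snd (snd e) \<noteq> rep q}"
  have finTr: "finite Tr"
  proof -
    have "Tr \<subseteq> Sigma Q (\<lambda>q. {e\<in>E. fst e = rep q})" unfolding Tr_def by auto
    moreover have "finite (Sigma Q (\<lambda>q. {e\<in>E. fst e = rep q}))"
      using bd rep unfolding bounded_degree_def Q_def by (intro finite_SigmaI) auto
    ultimately show ?thesis using finite_subset by blast
  qed
  obtain h where h: "bij_betw h {0..<card Tr} Tr" using ex_bij_betw_nat_finite[OF finTr] by blast
  define T where "T = {0..<card Tr}"
  define \<alpha> where "\<alpha> \<tau> = fst (h \<tau>)" for \<tau>
  define lb where "lb \<tau> = fst (snd (snd (h \<tau>)))" for \<tau>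
  define tgt where "tgt \<tau> = snd (snd (snd (h \<tau>)))" for \<tau>
  define \<omega> where "\<omega> \<tau> = st (tgt \<tau>)" for \<tau>
  define p where "p = st r"
  have hT: "h \<tau> \<in> Tr" if "\<tau> \<in> T" for \<tau> using h that unfolding T_def bij_betw_def by auto
  have hform: "h \<tau> = (\<alpha> \<tau>, rep (\<alpha> \<tau>), lb \<tau>, tgt \<tau>) \<and> \<alpha> \<tau> \<in> Q \<and> (rep (\<alpha> \<tau>), lb \<tau>, tgt \<tau>) \<in> E
      \<and> tgt \<tau> \<in> desc (rep (\<alpha> \<tau>)) \<and> tgt \<tau> \<noteq> rep (\<alpha> \<tau>)" if "\<tau> \<in> T" for \<tau>
    using hT[OF that] unfolding Tr_def \<alpha>_def lb_def tgt_def by (cases "h \<tau>") auto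
  define R where "R = runs T \<alpha> \<omega> p"
  define RE where "RE = run_edges iv T \<alpha> lb \<omega> p"
  define \<Psi> where "\<Psi> \<rho> = foldl (\<lambda>x \<tau>. J x (tgt \<tau>)) r \<rho>" for \<rho>
  have Psi_Nil: "\<Psi> [] = r" unfolding \<Psi>_def by simp
  have Psi_snoc: "\<Psi> (\<rho> @ [\<tau>]) = J (\<Psi> \<rho>) (tgt \<tau>)" for \<rho> \<tau> unfolding \<Psi>_def by simp
  have S: "J x (tgt \<tau>) \<in> desc x \<and> J x (tgt \<tau>) \<in> V \<and> (x, lb \<tau>, J x (tgt \<tau>)) \<in> E \<and>
           pth (J x (tgt \<tau>)) = pth x @ [(x, lb \<tau>, J x (tgt \<tau>))] \<and> st (J x (tgt \<tau>)) = \<omega> \<tau>"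
    if xV: "x \<in> V" and \<tau>T: "\<tau> \<in> T" and a\<tau>: "\<alpha> \<tau> = st x" for x \<tau>
  proof -
    note hf = hform[OF \<tau>T]
    define q where "q = st x"
    have qQ: "q \<in> Q" using stQ[OF xV] q_def by simp
    have repV: "rep q \<in> V" using rep[OF qQ] by simp
    have c: "ciso (rep q) x (J x)" using J[OF xV] q_def by simp
    have yd: "tgt \<tau> \<in> desc (rep q)" and ye: "(rep q, lb \<tau>, tgt \<tau>) \<in> E" and yne: "tgt \<tau> \<noteq> rep q"
      using hf a\<tau> q_def by auto
    have bij: "bij_betw (J x) (desc (rep q)) (desc x)" using ciso_bij[OF c] .
    have Jr: "J x (rep q) = x" using c by (simp add: ciso_def)
    have jd: "J x (tgt \<tau>) \<in> desc x" using bij yd by (auto simp: bij_betw_def)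
    have jV: "J x (tgt \<tau>) \<in> V" using jd desc_V by blast
    have e: "(x, lb \<tau>, J x (tgt \<tau>)) \<in> E" using ciso_edge[OF c desc_self[OF repV] yd] ye Jr by simp
    have jne: "J x (tgt \<tau>) \<noteq> x"
    proof
      assume "J x (tgt \<tau>) = x"
      then have "J x (tgt \<tau>) = J x (rep q)" using Jr by simp
      then show False using bij yd desc_self[OF repV] yne unfolding bij_betw_def by (auto dest: inj_onD)
    qed
    have pj: "pth (J x (tgt \<tau>)) = pth x @ [(x, lb \<tau>, J x (tgt \<tau>))]" using child_pth[OF xV e jd jne] .
    have "ciso (tgt \<tau>) (J x (tgt \<tau>)) (J x)" using ciso_restrict[OF c repV xV yd] .
    then have "eiso (tgt \<tau>) (J x (tgt \<tau>))" unfolding eiso_def by blast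
    then have "st (tgt \<tau>) = st (J x (tgt \<tau>))" using eiso_st yd desc_V jV by blast
    then show ?thesis using jd jV e pj unfolding \<omega>_def by simp
  qed
  have I1: "\<rho> \<in> R \<Longrightarrow> \<Psi> \<rho> \<in> V \<and> end_state \<omega> p \<rho> = st (\<Psi> \<rho>) \<and> d (\<Psi> \<rho>) = length \<rho>" for \<rho>
  proof (induction \<rho> rule: rev_induct)
    case Nil then show ?case using Psi_Nil rV p_def pth_r d_def by simp
  next
    case (snoc \<tau> \<rho>)
    have h1: "\<rho> \<in> R" "\<tau> \<in> T" "\<alpha> \<tau> = end_state \<omega> p \<rho>" using snoc.prems unfolding R_def by (auto simp: runs_snoc)
    have ih: "\<Psi> \<rho> \<in> V" "end_state \<omega> p \<rho> = st (\<Psi> \<rho>)" "d (\<Psi> \<rho>) = length \<rho>" using snoc.IH[OF h1(1)] by auto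
    note s = S[OF ih(1) h1(2) h1(3)[unfolded ih(2)]]
    then show ?case unfolding Psi_snoc using ih(3) unfolding d_def by simp
  qed
  have I1V: "\<Psi> \<rho> \<in> V" if "\<rho> \<in> R" for \<rho> using I1[OF that] by (rule conjunct1)
  have I1s: "end_state \<omega> p \<rho> = st (\<Psi> \<rho>)" if "\<rho> \<in> R" for \<rho> using conjunct2[OF I1[OF that]] by (rule conjunct1)
  have I1d: "d (\<Psi> \<rho>) = length \<rho>" if "\<rho> \<in> R" for \<rho> using conjunct2[OF I1[OF that]] by (rule conjunct2)
  have I2: "(\<Psi> \<rho>, lb \<tau>, \<Psi> (\<rho> @ [\<tau>])) \<in> E \<and> pth (\<Psi> (\<rho> @ [\<tau>])) = pth (\<Psi> \<rho>) @ [(\<Psi> \<rho>, lb \<tau>, \<Psi> (\<rho> @ [\<tau>]))]"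
    if "\<rho> @ [\<tau>] \<in> R" for \<rho> \<tau>
  proof -
    have h1: "\<rho> \<in> R" "\<tau> \<in> T" "\<alpha> \<tau> = end_state \<omega> p \<rho>" using that unfolding R_def by (auto simp: runs_snoc)
    have ih: "\<Psi> \<rho> \<in> V" "end_state \<omega> p \<rho> = st (\<Psi> \<rho>)" using I1[OF h1(1)] by auto
    show ?thesis using S[OF ih(1) h1(2) h1(3)[unfolded ih(2)]] unfolding Psi_snoc by simp
  qed
  have I3: "\<rho>1 \<in> R \<Longrightarrow> \<rho>2 \<in> R \<Longrightarrow> \<Psi> \<rho>1 = \<Psi> \<rho>2 \<Longrightarrow> \<rho>1 = \<rho>2" for \<rho>1 \<rho>2
  proof (induction \<rho>1 arbitrary: \<rho>2 rule: rev_induct)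
    case Nil
    have nR: "[] \<in> R" unfolding R_def by (rule runs_Nil)
    have l: "d (\<Psi> []) = length ([]::nat list)" by (rule I1d[OF nR])
    have "length \<rho>2 = d (\<Psi> \<rho>2)" using I1d[OF Nil(2)] by (rule sym)
    also have "\<dots> = d (\<Psi> [])" by (simp only: Nil(3))
    also have "\<dots> = 0" using l by (simp only: list.size)
    finally show ?case by (simp only: length_0_conv)
  next
    case (snoc \<tau>1 \<sigma>1)
    have "d (\<Psi> (\<sigma>1 @ [\<tau>1])) = length (\<sigma>1 @ [\<tau>1])" using I1d[OF snoc.prems(1)] .
    moreover have "d (\<Psi> \<rho>2) = length \<rho>2" using I1d[OF snoc.prems(2)] .
    ultimately have "length \<rho>2 = length \<sigma>1 + 1" using snoc.prems(3) by simp
    then obtain \<sigma>2 \<tau>2 where r2: "\<rho>2 = \<sigma>2 @ [\<tau>2]" by (cases \<rho>2 rule: rev_exhaust) auto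
    have s1: "\<sigma>1 \<in> R" "\<tau>1 \<in> T" "\<alpha> \<tau>1 = end_state \<omega> p \<sigma>1" using snoc.prems(1) unfolding R_def by (auto simp: runs_snoc)
    have s2: "\<sigma>2 \<in> R" "\<tau>2 \<in> T" "\<alpha> \<tau>2 = end_state \<omega> p \<sigma>2" using snoc.prems(2) r2 unfolding R_def by (auto simp: runs_snoc)
    have p1: "pth (\<Psi> (\<sigma>1 @ [\<tau>1])) = pth (\<Psi> \<sigma>1) @ [(\<Psi> \<sigma>1, lb \<tau>1, \<Psi> (\<sigma>1 @ [\<tau>1]))]" using I2[OF snoc.prems(1)] by (rule conjunct2)
    have p2: "pth (\<Psi> (\<sigma>2 @ [\<tau>2])) = pth (\<Psi> \<sigma>2) @ [(\<Psi> \<sigma>2, lb \<tau>2, \<Psi> (\<sigma>2 @ [\<tau>2]))]" using I2[of \<sigma>2 \<tau>2] snoc.prems(2) r2 by simp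
    have eq: "\<Psi> (\<sigma>1 @ [\<tau>1]) = \<Psi> (\<sigma>2 @ [\<tau>2])" using snoc.prems(3) r2 by simp
    have "pth (\<Psi> \<sigma>1) @ [(\<Psi> \<sigma>1, lb \<tau>1, \<Psi> (\<sigma>2 @ [\<tau>2]))] = pth (\<Psi> \<sigma>2) @ [(\<Psi> \<sigma>2, lb \<tau>2, \<Psi> (\<sigma>2 @ [\<tau>2]))]"
      using p1 p2 eq by simp
    then have pe: "pth (\<Psi> \<sigma>1) = pth (\<Psi> \<sigma>2)" and lbe: "lb \<tau>1 = lb \<tau>2" by simp_all
    have "\<Psi> \<sigma>1 \<in> V" "\<Psi> \<sigma>2 \<in> V" using I1V[OF s1(1)] I1V[OF s2(1)] by simp_all
    then have "\<Psi> \<sigma>1 = \<Psi> \<sigma>2" using pth_inj pe by blast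
    then have se: "\<sigma>1 = \<sigma>2" using snoc.IH[OF s1(1) s2(1)] by blast
    define x where "x = \<Psi> \<sigma>1"
    have xV: "x \<in> V" and stx: "end_state \<omega> p \<sigma>1 = st x" using I1V[OF s1(1)] I1s[OF s1(1)] x_def by auto
    have a1: "\<alpha> \<tau>1 = st x" using s1(3) stx by simp
    have a2: "\<alpha> \<tau>2 = st x" using s2(3) stx se by simp
    have "J x (tgt \<tau>1) = J x (tgt \<tau>2)" using eq se unfolding x_def Psi_snoc by simp
    moreover have "tgt \<tau>1 \<in> desc (rep (st x))" "tgt \<tau>2 \<in> desc (rep (st x))"
      using hform[OF s1(2)] hform[OF s2(2)] a1 a2 by simp_all
    moreover have "inj_on (J x) (desc (rep (st x)))" using ciso_bij[OF J[OF xV]] by (simp add: bij_betw_def)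
    ultimately have "tgt \<tau>1 = tgt \<tau>2" by (meson inj_onD)
    then have "h \<tau>1 = h \<tau>2" using hform[OF s1(2)] hform[OF s2(2)] a1 a2 lbe by simp
    moreover have "inj_on h T" using h unfolding T_def bij_betw_def by simp
    ultimately have "\<tau>1 = \<tau>2" using s1(2) s2(2) by (meson inj_onD)
    then show ?case using se r2 by simp
  qed
  have I4: "\<forall>v\<in>V. d v = n \<longrightarrow> (\<exists>\<rho>\<in>R. \<Psi> \<rho> = v)" for n
  proof (induction n)
    case 0
    show ?case
    proof (intro ballI impI)
      fix v assume "v \<in> V" "d v = 0"
      then have "v = r" using pth_Nil unfolding d_def by simp
      then show "\<exists>\<rho>\<in>R. \<Psi> \<rho> = v" using Psi_Nil R_def by auto
    qed
  next
    case (Suc n)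
    show ?case
    proof (intro ballI impI)
      fix v assume vV: "v \<in> V" and dv: "d v = Suc n"
      then have "pth v \<noteq> []" unfolding d_def by auto
      then obtain x a where x: "x \<in> V" "(x, a, v) \<in> E" "pth v = pth x @ [(x, a, v)]" using pth_snoc[OF vV] by blast
      have "d x = n" using x(3) dv unfolding d_def by simp
      then obtain \<rho> where \<rho>: "\<rho> \<in> R" "\<Psi> \<rho> = x" using Suc.IH x(1) by blast
      define q where "q = st x"
      have qQ: "q \<in> Q" using stQ[OF x(1)] q_def by simp
      have repV: "rep q \<in> V" using rep[OF qQ] by simp
      have c: "ciso (rep q) x (J x)" using J[OF x(1)] q_def by simp
      have bij: "bij_betw (J x) (desc (rep q)) (desc x)" using ciso_bij[OF c] .
      have Jr: "J x (rep q) = x" using c by (simp add: ciso_def)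
      have vd: "v \<in> desc x" using x vV by (auto simp: desc_def)
      then have "v \<in> J x ` desc (rep q)" using bij unfolding bij_betw_def by simp
      then obtain y where y: "y \<in> desc (rep q)" "J x y = v" by blast
      have yne: "y \<noteq> rep q" using y Jr x(3) by auto
      have ye: "(rep q, a, y) \<in> E" using ciso_edge[OF c desc_self[OF repV] y(1)] Jr y x(2) by simp
      have "(q, (rep q, a, y)) \<in> Tr" unfolding Tr_def using qQ ye y yne by auto
      then obtain \<tau> where \<tau>: "\<tau> \<in> T" "h \<tau> = (q, (rep q, a, y))" using h unfolding T_def bij_betw_def by force
      have a\<tau>: "\<alpha> \<tau> = q" "tgt \<tau> = y" using \<tau> unfolding \<alpha>_def tgt_def by auto
      have "end_state \<omega> p \<rho> = st x" using I1[OF \<rho>(1)] \<rho>(2) by simp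
      then have "\<rho> @ [\<tau>] \<in> R" using \<rho>(1) \<tau>(1) a\<tau> q_def unfolding R_def by (simp add: runs_snoc)
      moreover have "\<Psi> (\<rho> @ [\<tau>]) = v" using Psi_snoc \<rho>(2) a\<tau> y by simp
      ultimately show "\<exists>\<rho>\<in>R. \<Psi> \<rho> = v" by blast
    qed
  qed
  have I5: "(\<rho>1, a, \<rho>2) \<in> RE \<longleftrightarrow> (\<Psi> \<rho>1, a, \<Psi> \<rho>2) \<in> E" if r1: "\<rho>1 \<in> R" and r2: "\<rho>2 \<in> R" for \<rho>1 \<rho>2 a
  proof
    assume "(\<rho>1, a, \<rho>2) \<in> RE"
    then consider \<tau> where "\<rho>2 = \<rho>1 @ [\<tau>]" "a = lb \<tau>" | \<tau> where "\<rho>1 = \<rho>2 @ [\<tau>]" "a = iv (lb \<tau>)"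
      unfolding RE_def run_edges_iff by blast
    then show "(\<Psi> \<rho>1, a, \<Psi> \<rho>2) \<in> E"
    proof cases
      case 1 then show ?thesis using I2 r2 by blast
    next
      case 2 then show ?thesis using I2[of \<rho>2 \<tau>] r1 inv_edgeE by blast
    qed
  next
    assume e: "(\<Psi> \<rho>1, a, \<Psi> \<rho>2) \<in> E"
    have aA: "a \<in> A" using edgeV[OF e] by simp
    have V12: "\<Psi> \<rho>1 \<in> V" "\<Psi> \<rho>2 \<in> V" "d (\<Psi> \<rho>1) = length \<rho>1" "d (\<Psi> \<rho>2) = length \<rho>2" using I1 r1 r2 by auto
    from edge_cases[OF e] show "(\<rho>1, a, \<rho>2) \<in> RE"
    proof
      assume pe: "pth (\<Psi> \<rho>2) = pth (\<Psi> \<rho>1) @ [(\<Psi> \<rho>1, a, \<Psi> \<rho>2)]"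
      then have "length \<rho>2 = length \<rho>1 + 1" using V12 unfolding d_def by simp
      then obtain \<sigma> \<tau> where s: "\<rho>2 = \<sigma> @ [\<tau>]" by (cases \<rho>2 rule: rev_exhaust) auto
      have sR: "\<sigma> \<in> R" using r2 s unfolding R_def by (simp add: runs_snoc)
      have "pth (\<Psi> \<rho>2) = pth (\<Psi> \<sigma>) @ [(\<Psi> \<sigma>, lb \<tau>, \<Psi> \<rho>2)]" using I2 r2 s by blast
      then have "pth (\<Psi> \<sigma>) = pth (\<Psi> \<rho>1)" "lb \<tau> = a" using pe by auto
      then have "\<Psi> \<sigma> = \<Psi> \<rho>1" "lb \<tau> = a" using pth_inj I1 sR V12 by blast+
      then have "\<sigma> = \<rho>1" "lb \<tau> = a" using I3 sR r1 by blast+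
      then show ?thesis unfolding RE_def run_edges_iff using s r2 R_def by auto
    next
      assume pe: "pth (\<Psi> \<rho>1) = pth (\<Psi> \<rho>2) @ [(\<Psi> \<rho>2, iv a, \<Psi> \<rho>1)]"
      then have "length \<rho>1 = length \<rho>2 + 1" using V12 unfolding d_def by simp
      then obtain \<sigma> \<tau> where s: "\<rho>1 = \<sigma> @ [\<tau>]" by (cases \<rho>1 rule: rev_exhaust) auto
      have sR: "\<sigma> \<in> R" using r1 s unfolding R_def by (simp add: runs_snoc)
      have "pth (\<Psi> \<rho>1) = pth (\<Psi> \<sigma>) @ [(\<Psi> \<sigma>, lb \<tau>, \<Psi> \<rho>1)]" using I2 r1 s by blast
      then have "pth (\<Psi> \<sigma>) = pth (\<Psi> \<rho>2)" "lb \<tau> = iv a" using pe by auto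
      then have "\<Psi> \<sigma> = \<Psi> \<rho>2" "lb \<tau> = iv a" using pth_inj I1 sR V12 by blast+
      then have "\<sigma> = \<rho>2" "iv (lb \<tau>) = a" using I3 sR r2 ivv[OF aA] by auto
      then show ?thesis unfolding RE_def run_edges_iff using s r1 R_def by auto
    qed
  qed
  have PsiV: "\<Psi> ` R = V"
  proof
    show "\<Psi> ` R \<subseteq> V" using I1 by auto
    show "V \<subseteq> \<Psi> ` R"
    proof
      fix v assume "v \<in> V"
      then obtain \<rho> where "\<rho> \<in> R" "\<Psi> \<rho> = v" using I4[of "d v"] by blast
      then show "v \<in> \<Psi> ` R" by blast
    qed
  qed
  have injPsi: "inj_on \<Psi> R" using I3 by (auto intro: inj_onI)
  have bPsi: "bij_betw \<Psi> R V" using PsiV injPsi by (simp add: bij_betw_def)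
  define \<iota> where "\<iota> = inv_into R \<Psi>"
  have bi: "bij_betw \<iota> V R" using bij_betw_inv_into[OF bPsi] \<iota>_def by simp
  have iR: "\<iota> v \<in> R" "\<Psi> (\<iota> v) = v" if "v \<in> V" for v
    using bPsi that unfolding \<iota>_def bij_betw_def by (auto simp: inv_into_into f_inv_into_f)
  have iso: "A_iso V E R RE \<iota>"
    unfolding A_iso_def
  proof (intro conjI ballI allI)
    show "bij_betw \<iota> V R" using bi .
    fix u v a assume "u \<in> V" "v \<in> V"
    then show "((u, a, v) \<in> E) = ((\<iota> u, a, \<iota> v) \<in> RE)" using I5[of "\<iota> u" "\<iota> v" a] iR by simp
  qed
  have nR: "[] \<in> R" unfolding R_def by (rule runs_Nil)
  have "inv_into R \<Psi> (\<Psi> []) = []" by (rule inv_into_f_f[OF injPsi nR])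
  then have ir: "\<iota> r = []" unfolding \<iota>_def using Psi_Nil by simp
  have pQ: "p \<in> Q" using stQ rV p_def by simp
  have m: "mNFA A Q T \<alpha> lb \<omega>"
    unfolding mNFA_def
  proof (intro conjI ballI)
    show "finite Q" "finite T" unfolding Q_def T_def by simp_all
    show "finite A" using alph by (simp add: involutive_alphabet_def)
    fix \<tau> assume \<tau>T: "\<tau> \<in> T"
    note hf = hform[OF \<tau>T]
    show "\<alpha> \<tau> \<in> Q" using hf by simp
    have "tgt \<tau> \<in> V" using hf desc_V by blast
    then show "\<omega> \<tau> \<in> Q" unfolding \<omega>_def using stQ by blast
    show "lb \<tau> \<in> A" using hf edgeV by blast
  qed
  define lab where "lab v = end_state \<omega> p (\<iota> v)" for v
  have labQ: "lab ` V \<subseteq> Q" using end_state_in[OF m pQ] iR unfolding lab_def R_def by blast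
  have "rooted_labeled_iso V E r Q lab R RE [] Q (end_state \<omega> p)"
    unfolding rooted_labeled_iso_def
    apply (rule exI[of _ \<iota>], rule exI[of _ id])
    using iso ir by (simp add: lab_def)
  then have "regular_labeled A iv V E r Q lab"
    unfolding regular_labeled_def R_def RE_def using m pQ by blast
  then show ?thesis unfolding regular_rooted_def using labQ by blast
qed

end

theorem theorem3p3:
  fixes A :: "'a set" and iv :: "'a \<Rightarrow> 'a"
    and V :: "'v set" and E :: "('v \<times> 'a \<times> 'v) set"
  assumes "involutive_alphabet A iv"
    and "A_graph A V E"
    and "involutive_graph iv E"
    and "is_tree iv V E"
  shows "regular_tree A iv V E \<longleftrightarrow> context_free A iv V E"
proof -
  note alph = assms(1) and gr = assms(2) and inv = assms(3)
  obtain r0 where r0: "r0 \<in> V" "rooted_tree iv V E r0" using assms(4) unfolding is_tree_def by blast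
  have tr: "tree_ctx A iv V E r" if "r \<in> V" for r
    using reroot[OF alph gr inv r0(2) that] alph gr inv by (simp add: tree_ctx_def)
  have conn: "connected_graph V E"
    unfolding connected_graph_def
  proof (intro ballI)
    fix u v assume "u \<in> V" "v \<in> V"
    then obtain es1 es2 where "walk E r0 es1 u" "walk E r0 es2 v" using r0(2) unfolding rooted_tree_def by blast
    then have "walk E u (rev (map (inv_edge iv) es1)) r0" "walk E r0 es2 v" using walk_rev[OF inv] by auto
    then have "walk E u (rev (map (inv_edge iv) es1) @ es2) v" unfolding walk_append by blast
    then show "\<exists>es. walk E u es v" by blast
  qed
  show ?thesis
  proof
    assume "regular_tree A iv V E"
    then obtain r where r1: "r \<in> V" and rr: "regular_rooted A iv V E r" unfolding regular_tree_def
      apply (elim bexE) apply (rule that) apply assumption+ done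
    from rr obtain P lab where rl: "regular_labeled A iv V E r (P::nat set) (lab::'v \<Rightarrow> nat)" unfolding regular_rooted_def
      apply (elim exE conjE) apply (rule that) apply assumption+ done
    from rl obtain Q T \<alpha> lb \<omega> p where m1: "mNFA A (Q::nat set) (T::nat set) \<alpha> lb \<omega>" and m2: "p \<in> Q" and
      m5: "rooted_labeled_iso V E r P lab (runs T \<alpha> \<omega> p) (run_edges iv T \<alpha> lb \<omega> p) [] Q (end_state \<omega> p)"
      unfolding regular_labeled_def apply (elim exE conjE) apply (rule that) apply assumption+ done
    from m5 obtain \<iota> where m3: "A_iso V E (runs T \<alpha> \<omega> p) (run_edges iv T \<alpha> lb \<omega> p) \<iota>" and m4: "\<iota> r = []"
      unfolding rooted_labeled_iso_def apply (elim exE conjE) apply (rule that) apply assumption+ done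
    have dd: "bounded_degree V E \<and> finite ((\<lambda>v. {w\<in>V. end_isomorphic V E r w v}) ` V)"
      using tree_ctx.dir1[OF tr[OF r1] m1 m2 m3 m4] .
    show "context_free A iv V E" unfolding context_free_def
      apply (intro conjI alph gr inv conn)
       apply (rule conjunct1[OF dd])
      apply (rule bexI[where x=r])
       apply (rule conjunct2[OF dd])
      apply (rule r1)
      done
  next
    assume cf: "context_free A iv V E"
    have cf': "bounded_degree V E \<and> (\<exists>r\<in>V. finite ((\<lambda>v. {w\<in>V. end_isomorphic V E r w v}) ` V))"
      using cf unfolding context_free_def apply (elim conjE) apply (rule conjI) apply assumption+ done
    obtain r where r1: "r \<in> V" and r3: "finite ((\<lambda>v. {w\<in>V. end_isomorphic V E r w v}) ` V)"
      using conjunct2[OF cf'] apply (elim bexE) apply (rule that) apply assumption+ done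
    have "regular_rooted A iv V E r" using tree_ctx.dir2[OF tr[OF r1] conjunct1[OF cf'] r3] .
    then show "regular_tree A iv V E" unfolding regular_tree_def by (rule bexI[OF _ r1])
  qed
qed


end
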